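(* In the setting described in the context, there exist $\delta\in(0,\tfrac{\sqrt2}{2})$ with $\lambda_Ka_K-\lambda_1a_1\delta>0$ and $\bar\eta>0$ satisfying $g(\mathbf Q)-g(\mathbf X)\ge\bar\eta\,d_F^2(\mathbf X,\mathbf Q)$ for all $\mathbf X\in\mathrm{St}(d,K)$, such that for every $\alpha\in(0,\lambda_Ka_K-\lambda_1a_1\delta)$ there exists $\gamma\in(0,1)$ with the following property. Set $\delta_1=\delta^2\bar\eta$, $c=\lambda_Ka_K-\lambda_1a_1\delta-\alpha>0$, and let $L_g>0$ be a Lipschitz constant of $g$ on $\mathrm{St}(d,K)$ in the Frobenius norm. Suppose (a) $\mathbf X^0\in\mathrm{St}(d,K)$ satisfies $g(\mathbf Q)-g(\mathbf X^0)\le\delta_1$, and (b) $\sum_{k=1}^K\|\Delta_k\|\le\frac{2c(1-\gamma)\delta_1}{2L_g+(1-\gamma)\delta_1}$. Then every sequence $\{\mathbf X^t\}_{t\ge0}$ generated by $\mathbf X^{t+1}\in\mathcal P_{\mathrm{St}}\big(\alpha\mathbf X^t+[\mathbf M_1\mathbf x_1^t,\dots,\mathbf M_K\mathbf x_K^t]\big)$ satisfies $d_F(\mathbf X^t,\mathbf Q)\le\delta$ for all $t\ge0$.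
   Context: $d>K\ge1$, $\mathrm{St}(d,K)=\{\mathbf X\in\mathbb R^{d\times K}:\mathbf X^\top\mathbf X=\mathbf I_K\}$, $\mathbf Q\in\mathrm{St}(d,K)$, $\lambda_1>\dots>\lambda_K>0$, $\boldsymbol\Theta=\mathrm{diag}(\sqrt{\lambda_1},\dots,\sqrt{\lambda_K})$. Integers $L\ge1$, $n_1,\dots,n_L\ge1$, $n=\sum_ln_l$; $v_1>\dots>v_L>0$; data $\mathbf y_{l,i}=\mathbf Q\boldsymbol\Theta\mathbf z_{l,i}+\boldsymbol\eta_{l,i}\in\mathbb R^d$ ($l\in[L],i\in[n_l]$) with $\mathbf z_{l,i}$ i.i.d. $\mathcal N(\mathbf0,\mathbf I_K)$ independent of $\boldsymbol\eta_{l,i}$ i.i.d. $\mathcal N(\mathbf 0,v_l\mathbf I_d)$. $w_{l,k}=\lambda_k/(\lambda_k+v_l)$, $a_k=\sum_l w_{l,k}\frac{n_l}{n}\frac1{v_l}$ (so $a_1>\dots>a_K>0$), $\gamma_k=\sum_lw_{l,k}\frac{n_l}{n}$, $\mathbf M_k=\frac1n\sum_{l}\sum_{i}\frac{w_{l,k}}{v_l}\mathbf y_{l,i}\mathbf y_{l,i}^\top-\gamma_k\mathbf I_d$, $\Delta_k=\mathbf M_k-a_k\mathbf Q\boldsymbol\Theta^2\mathbf Q^\top$; $\|\Delta_k\|$ is the operator norm. $g(\mathbf X)=\mathrm{tr}(\mathbf X^\top\mathbf Q\boldsymbol\Theta^2\mathbf Q^\top\mathbf X\,\mathrm{diag}(a_1,\dots,a_K))$,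 $d_F(\mathbf X,\mathbf Q)=\min_{\mathbf q\in\{\pm1\}^K}\|\mathbf X-\mathbf Q\,\mathrm{diag}(\mathbf q)\|_F$. $\mathbf x_k^t$ is the $k$-th column of $\mathbf X^t$; $\mathcal P_{\mathrm{St}}(\mathbf Y)$ is the set of Frobenius-nearest points of $\mathrm{St}(d,K)$ to $\mathbf Y$. *)

theory Defs
  imports Complex_Main "Jordan_Normal_Form.Matrix"
begin

text \<open>Matrices are JNF matrices ('real mat'); all indices are 0-based:
  the paper's index k in [K] is k-1 here, l in [L] is l-1, i in [n_l] is i-1.\<close>

definition vnorm :: "real vec \<Rightarrow> real" where
  "vnorm x = sqrt (\<Sum>i<dim_vec x. (x $ i)^2)"

definition fro_norm :: "real mat \<Rightarrow> real" where
  "fro_norm A = sqrt (\<Sum>i<dim_row A. \<Sum>j<dim_col A. (A $$ (i,j))^2)"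

definition op_norm :: "real mat \<Rightarrow> real" where
  "op_norm A = Sup {vnorm (A *\<^sub>v x) | x. x \<in> carrier_vec (dim_col A) \<and> vnorm x \<le> 1}"

definition mat_trace :: "real mat \<Rightarrow> real" where
  "mat_trace A = (\<Sum>i<dim_row A. A $$ (i,i))"

definition diag_of :: "nat \<Rightarrow> (nat \<Rightarrow> real) \<Rightarrow> real mat" where
  "diag_of K f = mat K K (\<lambda>(i,j). if i = j then f i else 0)"

definition stiefel :: "nat \<Rightarrow> nat \<Rightarrow> real mat set" where
  "stiefel d K = {X \<in> carrier_mat d K. X\<^sup>T * X = 1\<^sub>m K}"

definition proj_St :: "nat \<Rightarrow> nat \<Rightarrow> real mat \<Rightarrow> real mat set" where
  "proj_St d K Y = {X \<in> stiefel d K. \<forall>Z \<in> stiefel d K. fro_norm (Y - X) \<le> fro_norm (Y - Z)}"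

definition dF :: "nat \<Rightarrow> real mat \<Rightarrow> real mat \<Rightarrow> real" where
  "dF K X Q = Min {fro_norm (X - Q * diag_of K (\<lambda>k. q ! k)) | q.
                      length q = K \<and> set q \<subseteq> {-1, 1}}"

text \<open>Weights: w_{l,k}, a_k, gamma_k  (lam = lambda, v = noise variances, nl = sample sizes)\<close>
definition wgt :: "(nat \<Rightarrow> real) \<Rightarrow> (nat \<Rightarrow> real) \<Rightarrow> nat \<Rightarrow> nat \<Rightarrow> real" where
  "wgt lam v l k = lam k / (lam k + v l)"

definition ntot :: "nat \<Rightarrow> (nat \<Rightarrow> nat) \<Rightarrow> nat" where
  "ntot L nl = (\<Sum>l<L. nl l)"

definition acoef :: "nat \<Rightarrow> (nat \<Rightarrow> nat) \<Rightarrow> (nat \<Rightarrow> real) \<Rightarrow> (nat \<Rightarrow> real) \<Rightarrow> nat \<Rightarrow> real" where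
  "acoef L nl lam v k = (\<Sum>l<L. wgt lam v l k * (real (nl l) / real (ntot L nl)) * (1 / v l))"

definition gcoef :: "nat \<Rightarrow> (nat \<Rightarrow> nat) \<Rightarrow> (nat \<Rightarrow> real) \<Rightarrow> (nat \<Rightarrow> real) \<Rightarrow> nat \<Rightarrow> real" where
  "gcoef L nl lam v k = (\<Sum>l<L. wgt lam v l k * (real (nl l) / real (ntot L nl)))"

definition Mk :: "nat \<Rightarrow> nat \<Rightarrow> (nat \<Rightarrow> nat) \<Rightarrow> (nat \<Rightarrow> real) \<Rightarrow> (nat \<Rightarrow> real)
                   \<Rightarrow> (nat \<Rightarrow> nat \<Rightarrow> real vec) \<Rightarrow> nat \<Rightarrow> real mat" where
  "Mk d L nl lam v y k = mat d d (\<lambda>(p,q).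
      (1 / real (ntot L nl)) * (\<Sum>l<L. \<Sum>i<nl l. (wgt lam v l k / v l) * (y l i $ p) * (y l i $ q))
      - (if p = q then gcoef L nl lam v k else 0))"

definition sigQ :: "nat \<Rightarrow> real mat \<Rightarrow> (nat \<Rightarrow> real) \<Rightarrow> real mat" where
  "sigQ K Q lam = Q * diag_of K lam * Q\<^sup>T"

definition Deltak :: "nat \<Rightarrow> nat \<Rightarrow> nat \<Rightarrow> (nat \<Rightarrow> nat) \<Rightarrow> real mat \<Rightarrow> (nat \<Rightarrow> real) \<Rightarrow> (nat \<Rightarrow> real)
                   \<Rightarrow> (nat \<Rightarrow> nat \<Rightarrow> real vec) \<Rightarrow> nat \<Rightarrow> real mat" where
  "Deltak d K L nl Q lam v y k = Mk d L nl lam v y k - acoef L nl lam v k \<cdot>\<^sub>m sigQ K Q lam"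

definition gfun :: "nat \<Rightarrow> nat \<Rightarrow> (nat \<Rightarrow> nat) \<Rightarrow> real mat \<Rightarrow> (nat \<Rightarrow> real) \<Rightarrow> (nat \<Rightarrow> real)
                   \<Rightarrow> real mat \<Rightarrow> real" where
  "gfun K L nl Q lam v X = mat_trace (X\<^sup>T * sigQ K Q lam * X * diag_of K (acoef L nl lam v))"

definition colmap :: "nat \<Rightarrow> nat \<Rightarrow> (nat \<Rightarrow> real mat) \<Rightarrow> real mat \<Rightarrow> real mat" where
  "colmap d K M X = mat d K (\<lambda>(i,k). (M k *\<^sub>v col X k) $ i)"

end

theory Submission
  imports Defs
begin


definition extz :: "nat \<Rightarrow> (nat \<Rightarrow> real) \<Rightarrow> nat \<Rightarrow> real" where
  "extz K f m = (if m < K then f m else 0)"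

definition gapf :: "nat \<Rightarrow> (nat \<Rightarrow> real) \<Rightarrow> nat \<Rightarrow> real" where
  "gapf K f m = extz K f m - extz K f (Suc m)"

definition mu :: "nat \<Rightarrow> (nat \<Rightarrow> real) \<Rightarrow> (nat \<Rightarrow> real) \<Rightarrow> real" where
  "mu K a lm = Min ((\<lambda>m. gapf K a m * gapf K lm m) ` {..<K})"

lemma gapf_pos:
  assumes "\<forall>i j. i < j \<and> j < K \<longrightarrow> f j < f i" "\<forall>k<K. 0 < f k" "m < K"
  shows "0 < gapf K f m"
  using assms unfolding gapf_def extz_def
  by (cases "Suc m < K") auto

lemma mu_pos:
  assumes "\<forall>i j. i < j \<and> j < K \<longrightarrow> a j < a i" "\<forall>k<K. 0 < a k"
    "\<forall>i j. i < j \<and> j < K \<longrightarrow> lm j < lm i" "\<forall>k<K. 0 < lm k" "1 \<le> K"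
  shows "0 < mu K a lm"
  unfolding mu_def using assms gapf_pos[of K a] gapf_pos[of K lm]
  by (subst Min_gr_iff) (auto intro!: mult_pos_pos simp: lessThan_empty_iff)

lemma mu_le:
  assumes "m < K" shows "mu K a lm \<le> gapf K a m * gapf K lm m"
  unfolding mu_def using assms by (intro Min_le) auto

lemma telescope:
  assumes "k < K" shows "(\<Sum>m\<in>{k..<K}. gapf K f m) = f k"
proof -
  have "(\<Sum>m\<in>{k..<K}. gapf K f m) = - (\<Sum>m\<in>{k..<K}. extz K f (Suc m) - extz K f m)"
    unfolding gapf_def by (simp flip: sum_negf)
  also have "\<dots> = - (extz K f K - extz K f k)"
    using assms by (subst sum_Suc_diff') auto
  also have "\<dots> = f k" using assms by (simp add: extz_def)
  finally show ?thesis .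
qed

lemma abel:
  fixes a f :: "nat \<Rightarrow> real"
  shows "(\<Sum>k<K. a k * f k) = (\<Sum>m<K. gapf K a m * (\<Sum>k\<le>m. f k))"
proof -
  have "(\<Sum>k<K. a k * f k) = (\<Sum>k<K. (\<Sum>m\<in>{k..<K}. gapf K a m) * f k)"
    by (intro sum.cong refl) (simp add: telescope)
  also have "\<dots> = (\<Sum>k<K. \<Sum>m<K. (if k \<le> m then gapf K a m * f k else 0))"
  proof (intro sum.cong refl)
    fix k assume "k \<in> {..<K}"
    have "(\<Sum>m\<in>{k..<K}. gapf K a m) * f k = (\<Sum>m\<in>{k..<K}. gapf K a m * f k)"
      by (simp add: sum_distrib_right)
    also have "\<dots> = (\<Sum>m<K. (if k \<le> m then gapf K a m * f k else 0))"
      by (rule sum.mono_neutral_cong_left) auto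
    finally show "(\<Sum>m\<in>{k..<K}. gapf K a m) * f k = (\<Sum>m<K. (if k \<le> m then gapf K a m * f k else 0))" .
  qed
  also have "\<dots> = (\<Sum>m<K. \<Sum>k<K. (if k \<le> m then gapf K a m * f k else 0))"
    by (rule sum.swap)
  also have "\<dots> = (\<Sum>m<K. gapf K a m * (\<Sum>k\<le>m. f k))"
  proof (intro sum.cong refl)
    fix m assume "m \<in> {..<K}"
    then have "(\<Sum>k<K. (if k \<le> m then gapf K a m * f k else 0)) = (\<Sum>k\<le>m. gapf K a m * f k)"
      by (intro sum.mono_neutral_cong_right) auto
    then show "(\<Sum>k<K. (if k \<le> m then gapf K a m * f k else 0)) = gapf K a m * (\<Sum>k\<le>m. f k)"
      by (simp add: sum_distrib_left)
  qed
  finally show ?thesis .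
qed

lemma split_lt:
  fixes g :: "nat \<Rightarrow> real"
  assumes "m < K" shows "(\<Sum>j<K. g j) = (\<Sum>j\<le>m. g j) + (\<Sum>j\<in>{Suc m..<K}. g j)"
proof -
  have "{..<K} = {..m} \<union> {Suc m..<K}" using assms by auto
  then have "(\<Sum>j<K. g j) = sum g ({..m} \<union> {Suc m..<K})" by simp
  also have "\<dots> = sum g {..m} + sum g {Suc m..<K}" by (rule sum.union_disjoint) auto
  finally show ?thesis .
qed

lemma tri_swap:
  fixes P :: "nat \<Rightarrow> nat \<Rightarrow> real"
  shows "(\<Sum>k<K. \<Sum>k'<k. P k k') = (\<Sum>k'<K. \<Sum>k\<in>{Suc k'..<K}. P k k')"
proof -
  have "(\<Sum>k<K. \<Sum>k'<k. P k k') = (\<Sum>k<K. \<Sum>k'<K. if k' < k then P k k' else 0)"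
    by (intro sum.cong refl sum.mono_neutral_cong_left) auto
  also have "\<dots> = (\<Sum>k'<K. \<Sum>k<K. if k' < k then P k k' else 0)" by (rule sum.swap)
  also have "\<dots> = (\<Sum>k'<K. \<Sum>k\<in>{Suc k'..<K}. P k k')"
    by (intro sum.cong refl sum.mono_neutral_cong_right) auto
  finally show ?thesis .
qed

lemma comb:
  fixes a lm :: "nat \<Rightarrow> real" and P :: "nat \<Rightarrow> nat \<Rightarrow> real"
  assumes a_dec: "\<forall>i j. i < j \<and> j < K \<longrightarrow> a j < a i" and a_pos: "\<forall>k<K. 0 < a k"
    and l_dec: "\<forall>i j. i < j \<and> j < K \<longrightarrow> lm j < lm i" and l_pos: "\<forall>k<K. 0 < lm k"
    and K1: "1 \<le> K"
    and Pnn: "\<forall>j<K. \<forall>k<K. 0 \<le> P j k"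
    and row: "\<forall>j<K. (\<Sum>k<K. P j k) \<le> 1" and col: "\<forall>k<K. (\<Sum>j<K. P j k) \<le> 1"
  shows "mu K a lm / 2 * (\<Sum>k<K. 1 - P k k)
         \<le> (\<Sum>k<K. a k * lm k) - (\<Sum>k<K. a k * (\<Sum>j<K. lm j * P j k))"
proof -
  define f where "f k = lm k - (\<Sum>j<K. lm j * P j k)" for k
  define c where "c m j = (\<Sum>k\<le>m. P j k)" for m j
  define A where "A m = (\<Sum>j\<le>m. 1 - c m j)" for m
  define B where "B m = (\<Sum>j\<in>{Suc m..<K}. c m j)" for m
  have mu0: "0 < mu K a lm" using mu_pos[OF a_dec a_pos l_dec l_pos K1] .
  have c_nn: "0 \<le> c m j" if "m < K" "j < K" for m j
    unfolding c_def using that Pnn by (intro sum_nonneg) auto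
  have c_le1: "c m j \<le> 1" if "m < K" "j < K" for m j
  proof -
    have "c m j \<le> (\<Sum>k<K. P j k)" unfolding c_def
      using that Pnn by (intro sum_mono2) auto
    then show ?thesis using row that by force
  qed
  have sumc: "(\<Sum>j<K. c m j) \<le> real m + 1" if "m < K" for m
  proof -
    have "(\<Sum>j<K. c m j) = (\<Sum>k\<le>m. \<Sum>j<K. P j k)" unfolding c_def by (rule sum.swap)
    also have "\<dots> \<le> (\<Sum>k\<le>m. 1)" using col that by (intro sum_mono) auto
    finally show ?thesis by simp
  qed
  have key: "gapf K lm m * (A m + B m) / 2 \<le> (\<Sum>k\<le>m. f k)" if mK: "m < K" for m
  proof -
    have F_eq: "(\<Sum>k\<le>m. f k) = (\<Sum>j\<le>m. lm j) - (\<Sum>j<K. lm j * c m j)"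
      unfolding f_def c_def
      by (simp add: sum_subtractf sum_distrib_left sum.swap[of _ "{..m}"])
    also have "\<dots> = (\<Sum>j\<le>m. lm j * (1 - c m j)) - (\<Sum>j\<in>{Suc m..<K}. lm j * c m j)"
      using split_lt[OF mK, of "\<lambda>j. lm j * c m j"]
      by (simp add: right_diff_distrib sum_subtractf)
    finally have F2: "(\<Sum>k\<le>m. f k) = (\<Sum>j\<le>m. lm j * (1 - c m j)) - (\<Sum>j\<in>{Suc m..<K}. lm j * c m j)" .
    have s1: "lm m * A m \<le> (\<Sum>j\<le>m. lm j * (1 - c m j))"
      unfolding A_def sum_distrib_left
    proof (intro sum_mono)
      fix j assume j: "j \<in> {..m}"
      have "lm m \<le> lm j" using j l_dec mK by (cases "j = m") (auto intro: less_imp_le)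
      moreover have "0 \<le> 1 - c m j" using c_le1 j mK by auto
      ultimately show "lm m * (1 - c m j) \<le> lm j * (1 - c m j)" by (rule mult_right_mono)
    qed
    have s2: "(\<Sum>j\<in>{Suc m..<K}. lm j * c m j) \<le> extz K lm (Suc m) * B m"
      unfolding B_def sum_distrib_left
    proof (intro sum_mono)
      fix j assume j: "j \<in> {Suc m..<K}"
      then have "Suc m < K" by auto
      then have "lm j \<le> extz K lm (Suc m)" using j l_dec unfolding extz_def
        by (cases "j = Suc m") (auto intro: less_imp_le)
      moreover have "0 \<le> c m j" using c_nn j mK by auto
      ultimately show "lm j * c m j \<le> extz K lm (Suc m) * c m j" by (rule mult_right_mono)
    qed
    have AB: "B m \<le> A m"
    proof -
      have "A m = (real m + 1) - (\<Sum>j\<le>m. c m j)" unfolding A_def by (simp add: sum_subtractf)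
      moreover have "B m = (\<Sum>j<K. c m j) - (\<Sum>j\<le>m. c m j)"
        unfolding B_def using split_lt[OF mK, of "c m"] by simp
      ultimately show ?thesis using sumc[OF mK] by simp
    qed
    have e0: "0 \<le> extz K lm (Suc m)" unfolding extz_def using l_pos by auto
    have g0: "0 \<le> gapf K lm m" using gapf_pos[OF l_dec l_pos mK] by simp
    have gl: "gapf K lm m = lm m - extz K lm (Suc m)" unfolding gapf_def extz_def using mK by simp
    have "extz K lm (Suc m) * B m \<le> extz K lm (Suc m) * A m" using AB e0 by (rule mult_left_mono)
    then have "gapf K lm m * A m \<le> (\<Sum>k\<le>m. f k)" using F2 s1 s2 gl by (simp add: left_diff_distrib)
    moreover have "gapf K lm m * (A m + B m) / 2 \<le> gapf K lm m * A m"
    proof -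
      have "gapf K lm m * (A m + B m) \<le> gapf K lm m * (2 * A m)" using AB g0
        by (intro mult_left_mono) auto
      then show ?thesis by simp
    qed
    ultimately show ?thesis by linarith
  qed
  have ABnn: "0 \<le> A m + B m" if "m < K" for m
  proof -
    have "0 \<le> B m" unfolding B_def using c_nn that by (intro sum_nonneg) auto
    moreover have "0 \<le> A m" unfolding A_def using c_le1 that by (intro sum_nonneg) auto
    ultimately show ?thesis by simp
  qed
  have diag: "(\<Sum>k<K. 1 - P k k) \<le> (\<Sum>m<K. A m + B m)"
  proof -
    have "(\<Sum>k<K. 1 - P k k) = (\<Sum>k<K. 1 - c k k) + (\<Sum>k<K. \<Sum>k'<k. P k k')"
      unfolding c_def by (simp add: lessThan_Suc_atMost[symmetric] sum_subtractf sum.distrib)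
    also have "\<dots> = (\<Sum>k<K. 1 - c k k) + (\<Sum>k'<K. \<Sum>k\<in>{Suc k'..<K}. P k k')"
      by (simp add: tri_swap)
    also have "\<dots> \<le> (\<Sum>m<K. A m) + (\<Sum>m<K. B m)"
    proof (intro add_mono sum_mono)
      fix k assume k: "k \<in> {..<K}"
      show "1 - c k k \<le> A k" unfolding A_def
        using c_le1 k by (intro member_le_sum[where f="\<lambda>j. 1 - c k j"]) auto
    next
      fix k' assume k': "k' \<in> {..<K}"
      show "(\<Sum>k\<in>{Suc k'..<K}. P k k') \<le> B k'" unfolding B_def
      proof (intro sum_mono)
        fix k assume "k \<in> {Suc k'..<K}"
        then show "P k k' \<le> c k' k" unfolding c_def using Pnn k'
          by (intro member_le_sum[where f="\<lambda>x. P k x"]) auto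
      qed
    qed
    finally show ?thesis by (simp add: sum.distrib)
  qed
  have "(\<Sum>k<K. a k * lm k) - (\<Sum>k<K. a k * (\<Sum>j<K. lm j * P j k)) = (\<Sum>k<K. a k * f k)"
    unfolding f_def by (simp add: right_diff_distrib sum_subtractf)
  also have "\<dots> = (\<Sum>m<K. gapf K a m * (\<Sum>k\<le>m. f k))" by (rule abel)
  finally have eq: "(\<Sum>k<K. a k * lm k) - (\<Sum>k<K. a k * (\<Sum>j<K. lm j * P j k)) = (\<Sum>m<K. gapf K a m * (\<Sum>k\<le>m. f k))" .
  have "mu K a lm / 2 * (\<Sum>k<K. 1 - P k k) \<le> mu K a lm / 2 * (\<Sum>m<K. A m + B m)"
    using diag mu0 by (intro mult_left_mono) auto
  also have "\<dots> = (\<Sum>m<K. mu K a lm * ((A m + B m) / 2))" by (simp add: sum_distrib_left)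
  also have "\<dots> \<le> (\<Sum>m<K. gapf K a m * (gapf K lm m * (A m + B m) / 2))"
  proof (intro sum_mono)
    fix m assume m: "m \<in> {..<K}"
    have "mu K a lm * ((A m + B m) / 2) \<le> (gapf K a m * gapf K lm m) * ((A m + B m) / 2)"
      using mu_le[of m K a lm] m ABnn[of m] by (intro mult_right_mono) auto
    then show "mu K a lm * ((A m + B m) / 2) \<le> gapf K a m * (gapf K lm m * (A m + B m) / 2)"
      by simp
  qed
  also have "\<dots> \<le> (\<Sum>m<K. gapf K a m * (\<Sum>k\<le>m. f k))"
    using key gapf_pos[OF a_dec a_pos] by (intro sum_mono mult_left_mono) (auto intro: less_imp_le)
  finally show ?thesis using eq by simp
qed




definition dotv :: "nat \<Rightarrow> (nat \<Rightarrow> real) \<Rightarrow> (nat \<Rightarrow> real) \<Rightarrow> real" where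
  "dotv d x y = (\<Sum>i<d. x i * y i)"
definition colf :: "real mat \<Rightarrow> nat \<Rightarrow> nat \<Rightarrow> real" where
  "colf X k = (\<lambda>i. X $$ (i,k))"
definition bil :: "nat \<Rightarrow> real mat \<Rightarrow> (nat \<Rightarrow> real) \<Rightarrow> (nat \<Rightarrow> real) \<Rightarrow> real" where
  "bil d A u w = (\<Sum>p<d. \<Sum>q<d. u p * A $$ (p,q) * w q)"

lemma mult_entry:
  fixes A B :: "real mat"
  assumes "A \<in> carrier_mat n m" "B \<in> carrier_mat m r" "i < n" "j < r"
  shows "(A * B) $$ (i,j) = (\<Sum>l<m. A $$ (i,l) * B $$ (l,j))"
  using assms by (simp add: scalar_prod_def atLeast0LessThan)

lemma stiefel_iff:
  "X \<in> stiefel d K \<longleftrightarrow> X \<in> carrier_mat d K \<and>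
     (\<forall>k<K. \<forall>k'<K. dotv d (colf X k) (colf X k') = (if k = k' then 1 else 0))"
proof
  assume X: "X \<in> stiefel d K"
  then have C: "X \<in> carrier_mat d K" and E: "X\<^sup>T * X = 1\<^sub>m K" by (auto simp: stiefel_def)
  show "X \<in> carrier_mat d K \<and> (\<forall>k<K. \<forall>k'<K. dotv d (colf X k) (colf X k') = (if k = k' then 1 else 0))"
  proof (intro conjI allI impI C)
    fix k k' assume k: "k < K" and k': "k' < K"
    have "(X\<^sup>T * X) $$ (k,k') = (\<Sum>l<d. X\<^sup>T $$ (k,l) * X $$ (l,k'))"
      using C k k' by (intro mult_entry[where m=d]) auto
    also have "\<dots> = dotv d (colf X k) (colf X k')"
      unfolding dotv_def colf_def using C k by (intro sum.cong) auto
    finally show "dotv d (colf X k) (colf X k') = (if k = k' then 1 else 0)"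
      using E k k' by simp
  qed
next
  assume H: "X \<in> carrier_mat d K \<and> (\<forall>k<K. \<forall>k'<K. dotv d (colf X k) (colf X k') = (if k = k' then 1 else 0))"
  then have C: "X \<in> carrier_mat d K" by simp
  have "X\<^sup>T * X = 1\<^sub>m K"
  proof (rule eq_matI)
    fix k k' assume k: "k < dim_row (1\<^sub>m K)" and k': "k' < dim_col (1\<^sub>m K)"
    then have k: "k < K" and k': "k' < K" by auto
    have "(X\<^sup>T * X) $$ (k,k') = (\<Sum>l<d. X\<^sup>T $$ (k,l) * X $$ (l,k'))"
      using C k k' by (intro mult_entry[where m=d]) auto
    also have "\<dots> = dotv d (colf X k) (colf X k')"
      unfolding dotv_def colf_def using C k by (intro sum.cong) auto
    finally show "(X\<^sup>T * X) $$ (k,k') = 1\<^sub>m K $$ (k,k')" using H k k' by simp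
  qed (use C in auto)
  then show "X \<in> stiefel d K" using C by (simp add: stiefel_def)
qed

lemma diag_carrier: "diag_of K f \<in> carrier_mat K K" by (simp add: diag_of_def)

lemma mult_diag_entry:
  assumes "Q \<in> carrier_mat d K" "p < d" "j < K"
  shows "(Q * diag_of K f) $$ (p,j) = Q $$ (p,j) * f j"
proof -
  have "(Q * diag_of K f) $$ (p,j) = (\<Sum>l<K. Q $$ (p,l) * diag_of K f $$ (l,j))"
    using assms by (intro mult_entry[where m=K]) (auto simp: diag_carrier)
  also have "\<dots> = (\<Sum>l<K. (if l = j then Q $$ (p,l) * f j else 0))"
    using assms by (intro sum.cong) (auto simp: diag_of_def)
  also have "\<dots> = Q $$ (p,j) * f j" using assms by simp
  finally show ?thesis .
qed

lemma sigQ_carrier: "Q \<in> carrier_mat d K \<Longrightarrow> sigQ K Q lam \<in> carrier_mat d d"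
  unfolding sigQ_def using diag_carrier[of K lam] by (metis mult_carrier_mat transpose_carrier_mat)

lemma sigQ_entry:
  assumes "Q \<in> carrier_mat d K" "p < d" "q < d"
  shows "sigQ K Q lam $$ (p,q) = (\<Sum>j<K. Q $$ (p,j) * lam j * Q $$ (q,j))"
proof -
  have "sigQ K Q lam $$ (p,q) = (\<Sum>j<K. (Q * diag_of K lam) $$ (p,j) * Q\<^sup>T $$ (j,q))"
    unfolding sigQ_def using assms
    by (intro mult_entry[where m=K]) (auto intro: mult_carrier_mat diag_carrier)
  also have "\<dots> = (\<Sum>j<K. Q $$ (p,j) * lam j * Q $$ (q,j))"
    using assms by (intro sum.cong) (auto simp: mult_diag_entry)
  finally show ?thesis .
qed

lemma bil_sigQ:
  assumes "Q \<in> carrier_mat d K"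
  shows "bil d (sigQ K Q lam) x x = (\<Sum>j<K. lam j * (dotv d (colf Q j) x)^2)"
proof -
  have "bil d (sigQ K Q lam) x x = (\<Sum>p<d. \<Sum>q<d. \<Sum>j<K. lam j * (Q $$ (p,j) * x p) * (Q $$ (q,j) * x q))"
    unfolding bil_def using assms
    by (intro sum.cong refl) (simp add: sigQ_entry sum_distrib_left sum_distrib_right mult_ac)
  also have "\<dots> = (\<Sum>j<K. \<Sum>p<d. \<Sum>q<d. lam j * (Q $$ (p,j) * x p) * (Q $$ (q,j) * x q))"
    by (simp add: sum.swap[of _ "{..<K}"])
  also have "\<dots> = (\<Sum>j<K. lam j * (dotv d (colf Q j) x)^2)"
    unfolding dotv_def colf_def power2_eq_square
    by (simp add: sum_distrib_left sum_distrib_right mult_ac)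
  finally show ?thesis .
qed

lemma gfun_formula:
  assumes Q: "Q \<in> carrier_mat d K" and X: "X \<in> carrier_mat d K"
  shows "gfun K L nl Q lam v X = (\<Sum>k<K. acoef L nl lam v k * bil d (sigQ K Q lam) (colf X k) (colf X k))"
proof -
  define S where "S = sigQ K Q lam"
  have S: "S \<in> carrier_mat d d" using sigQ_carrier[OF Q] S_def by simp
  have XS: "X\<^sup>T * S \<in> carrier_mat K d" using S X by auto
  have XSX: "X\<^sup>T * S * X \<in> carrier_mat K K" using XS X by auto
  have e1: "(X\<^sup>T * S) $$ (k,p) = (\<Sum>q<d. X $$ (q,k) * S $$ (q,p))" if "k < K" "p < d" for k p
    using that X S by (subst mult_entry[where m=d]) auto
  have e2: "(X\<^sup>T * S * X) $$ (k,k) = bil d S (colf X k) (colf X k)" if "k < K" for k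
  proof -
    have "(X\<^sup>T * S * X) $$ (k,k) = (\<Sum>p<d. (X\<^sup>T * S) $$ (k,p) * X $$ (p,k))"
      using that XS X by (intro mult_entry[where m=d]) auto
    also have "\<dots> = (\<Sum>p<d. \<Sum>q<d. X $$ (q,k) * S $$ (q,p) * X $$ (p,k))"
      using that by (simp add: e1 sum_distrib_right)
    also have "\<dots> = bil d S (colf X k) (colf X k)"
      unfolding bil_def colf_def by (rule sum.swap)
    finally show ?thesis .
  qed
  have e3: "(X\<^sup>T * S * X * diag_of K (acoef L nl lam v)) $$ (k,k) = (X\<^sup>T * S * X) $$ (k,k) * acoef L nl lam v k"
    if "k < K" for k
  proof -
    have "(X\<^sup>T * S * X * diag_of K (acoef L nl lam v)) $$ (k,k)
        = (\<Sum>l<K. (X\<^sup>T * S * X) $$ (k,l) * diag_of K (acoef L nl lam v) $$ (l,k))"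
      using that XSX by (intro mult_entry[where m=K]) (auto simp: diag_carrier)
    also have "\<dots> = (\<Sum>l<K. if l = k then (X\<^sup>T * S * X) $$ (k,l) * acoef L nl lam v k else 0)"
      using that by (intro sum.cong) (auto simp: diag_of_def)
    finally show ?thesis using that by simp
  qed
  have "gfun K L nl Q lam v X = (\<Sum>k<K. (X\<^sup>T * S * X * diag_of K (acoef L nl lam v)) $$ (k,k))"
    unfolding gfun_def mat_trace_def S_def[symmetric] using X by simp
  also have "\<dots> = (\<Sum>k<K. acoef L nl lam v k * bil d S (colf X k) (colf X k))"
    by (intro sum.cong refl) (simp add: e2 e3)
  finally show ?thesis unfolding S_def .
qed




lemma CS_sum:
  fixes a b :: "nat \<Rightarrow> real"
  shows "(\<Sum>i\<in>I. a i * b i)\<^sup>2 \<le> (\<Sum>i\<in>I. (a i)\<^sup>2) * (\<Sum>i\<in>I. (b i)\<^sup>2)"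
proof (cases "(\<Sum>i\<in>I. (b i)\<^sup>2) > 0")
  case False
  then consider "\<And>i. i\<in>I \<Longrightarrow> b i = 0" | "infinite I"
    by (metis (mono_tags, lifting) sum_pos2 zero_le_power2 zero_less_power2)
  thus ?thesis
    by fastforce
next
  case True
  define r where "r \<equiv> (\<Sum>i\<in>I. a i * b i) / (\<Sum>i\<in>I. (b i)\<^sup>2)"
  have "0 \<le> (\<Sum>i\<in>I. (a i - r * b i)\<^sup>2)"
    by (simp add: sum_nonneg)
  also have "... = (\<Sum>i\<in>I. (a i)\<^sup>2) - 2 * r * (\<Sum>i\<in>I. a i * b i) + r\<^sup>2 * (\<Sum>i\<in>I. (b i)\<^sup>2)"
    by (simp add: algebra_simps power2_eq_square sum_distrib_left flip: sum.distrib)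
  also have "\<dots> = (\<Sum>i\<in>I. (a i)\<^sup>2) - ((\<Sum>i\<in>I. a i * b i))\<^sup>2 / (\<Sum>i\<in>I. (b i)\<^sup>2)"
    by (simp add: r_def power2_eq_square)
  finally have "0 \<le> (\<Sum>i\<in>I. (a i)\<^sup>2) - ((\<Sum>i\<in>I. a i * b i))\<^sup>2 / (\<Sum>i\<in>I. (b i)\<^sup>2)" .
  hence "((\<Sum>i\<in>I. a i * b i))\<^sup>2 / (\<Sum>i\<in>I. (b i)\<^sup>2) \<le> (\<Sum>i\<in>I. (a i)\<^sup>2)"
    by (simp add: le_diff_eq)
  thus "((\<Sum>i\<in>I. a i * b i))\<^sup>2 \<le> (\<Sum>i\<in>I. (a i)\<^sup>2) * (\<Sum>i\<in>I. (b i)\<^sup>2)"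
    using True by (simp add: field_simps)
qed

lemma bil_diff_left: "bil d A (\<lambda>i. u i - x i) w = bil d A u w - bil d A x w"
  unfolding bil_def by (simp add: left_diff_distrib sum_subtractf)
lemma bil_diff_right: "bil d A w (\<lambda>i. u i - x i) = bil d A w u - bil d A w x"
  unfolding bil_def by (simp add: right_diff_distrib sum_subtractf)

lemma bil_sym:
  assumes "\<forall>p<d. \<forall>q<d. A $$ (p,q) = A $$ (q,p)"
  shows "bil d A u w = bil d A w u"
proof -
  have "bil d A w u = (\<Sum>q<d. \<Sum>p<d. w p * A $$ (p,q) * u q)"
    unfolding bil_def by (rule sum.swap)
  also have "\<dots> = bil d A u w" unfolding bil_def
    using assms by (intro sum.cong refl) (simp add: mult_ac)
  finally show ?thesis by simp
qed

lemma bil_expand: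
  assumes "\<forall>p<d. \<forall>q<d. A $$ (p,q) = A $$ (q,p)"
  shows "bil d A u u - bil d A x x = 2 * bil d A (\<lambda>i. u i - x i) x + bil d A (\<lambda>i. u i - x i) (\<lambda>i. u i - x i)"
  using bil_sym[OF assms, of x u]
  by (simp add: bil_diff_left bil_diff_right algebra_simps)

lemma bil_lin:
  assumes "\<forall>p<d. \<forall>q<d. A $$ (p,q) = B $$ (p,q) - c * S $$ (p,q)"
  shows "bil d A u w = bil d B u w - c * bil d S u w"
proof -
  have "bil d A u w = (\<Sum>p<d. \<Sum>q<d. u p * B $$ (p,q) * w q - c * (u p * S $$ (p,q) * w q))"
    unfolding bil_def using assms by (intro sum.cong refl) (simp add: right_diff_distrib left_diff_distrib)
  then show ?thesis unfolding bil_def by (simp add: sum_subtractf sum_distrib_left)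
qed

definition mv :: "nat \<Rightarrow> real mat \<Rightarrow> (nat \<Rightarrow> real) \<Rightarrow> nat \<Rightarrow> real" where
  "mv d A w = (\<lambda>p. \<Sum>q<d. A $$ (p,q) * w q)"

lemma bil_mv: "bil d A w w = (\<Sum>p<d. w p * mv d A w p)"
  unfolding bil_def mv_def by (simp add: sum_distrib_left mult_ac)

lemma mult_vec_entry:
  assumes "A \<in> carrier_mat d d" "p < d"
  shows "(A *\<^sub>v vec d f) $ p = mv d A f p"
  using assms by (simp add: mv_def scalar_prod_def atLeast0LessThan)

lemma vnorm_vec: "vnorm (vec d f) = sqrt (\<Sum>i<d. (f i)^2)"
  unfolding vnorm_def by simp

lemma opset_bdd:
  assumes A: "A \<in> carrier_mat d d"
  shows "bdd_above {vnorm (A *\<^sub>v x) | x. x \<in> carrier_vec (dim_col A) \<and> vnorm x \<le> 1}"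
proof (rule bdd_aboveI)
  fix r assume "r \<in> {vnorm (A *\<^sub>v x) | x. x \<in> carrier_vec (dim_col A) \<and> vnorm x \<le> 1}"
  then obtain x where x: "x \<in> carrier_vec d" "vnorm x \<le> 1" and r: "r = vnorm (A *\<^sub>v x)" using A by auto
  have sx: "(\<Sum>i<d. (x $ i)^2) \<le> 1"
  proof -
    have "sqrt (\<Sum>i<d. (x $ i)^2) \<le> 1" using x unfolding vnorm_def by simp
    then show ?thesis by simp
  qed
  have "(\<Sum>p<d. ((A *\<^sub>v x) $ p)^2) \<le> (\<Sum>p<d. \<Sum>q<d. (A $$ (p,q))^2)"
  proof (intro sum_mono)
    fix p assume p: "p \<in> {..<d}"
    have "(A *\<^sub>v x) $ p = (\<Sum>q<d. A $$ (p,q) * x $ q)"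
      using A x p by (simp add: scalar_prod_def atLeast0LessThan)
    then have "((A *\<^sub>v x) $ p)^2 \<le> (\<Sum>q<d. (A $$ (p,q))^2) * (\<Sum>q<d. (x $ q)^2)"
      using CS_sum by simp
    also have "\<dots> \<le> (\<Sum>q<d. (A $$ (p,q))^2) * 1"
      using sx by (intro mult_left_mono) (auto intro: sum_nonneg)
    finally show "((A *\<^sub>v x) $ p)^2 \<le> (\<Sum>q<d. (A $$ (p,q))^2)" by simp
  qed
  then show "r \<le> sqrt (\<Sum>p<d. \<Sum>q<d. (A $$ (p,q))^2)"
    using r A unfolding vnorm_def by simp
qed

lemma op_norm_upper:
  assumes A: "A \<in> carrier_mat d d" and x: "x \<in> carrier_vec d" "vnorm x \<le> 1"
  shows "vnorm (A *\<^sub>v x) \<le> op_norm A"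
  unfolding op_norm_def using A x
  by (intro cSup_upper[OF _ opset_bdd[OF A]]) auto

lemma op_norm_nonneg:
  assumes A: "A \<in> carrier_mat d d"
  shows "0 \<le> op_norm A"
proof -
  have "vnorm (A *\<^sub>v 0\<^sub>v d) \<le> op_norm A"
    using A by (intro op_norm_upper) (auto simp: vnorm_def)
  moreover have "vnorm (A *\<^sub>v 0\<^sub>v d) = 0" using A unfolding vnorm_def
    by (simp add: scalar_prod_def)
  ultimately show ?thesis by simp
qed

lemma bil_op:
  assumes A: "A \<in> carrier_mat d d"
  shows "\<bar>bil d A w w\<bar> \<le> op_norm A * dotv d w w"
proof (cases "(\<Sum>i<d. (w i)^2) = 0")
  case True
  then have "\<forall>i<d. w i = 0" by (simp add: sum_nonneg_eq_0_iff)
  then show ?thesis by (simp add: bil_def dotv_def)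
next
  case False
  define s where "s = (\<Sum>i<d. (w i)^2)"
  have s0: "0 < s" using False unfolding s_def by (simp add: sum_nonneg order_le_neq_trans)
  define nw where "nw = sqrt s"
  have nw0: "0 < nw" using s0 nw_def by simp
  define u where "u = vec d (\<lambda>i. w i / nw)"
  have u: "u \<in> carrier_vec d" unfolding u_def by simp
  have "(\<Sum>i<d. (w i / nw)^2) = s / nw^2"
    unfolding s_def by (simp add: power_divide sum_divide_distrib)
  also have "\<dots> = 1" using s0 nw_def by simp
  finally have "vnorm u = 1" unfolding u_def vnorm_vec by simp
  then have up: "vnorm (A *\<^sub>v u) \<le> op_norm A" using op_norm_upper[OF A u] by simp
  have "(\<Sum>p<d. ((A *\<^sub>v u) $ p)^2) = (\<Sum>p<d. (mv d A w p)^2) / nw^2"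
  proof -
    have "(\<Sum>p<d. ((A *\<^sub>v u) $ p)^2) = (\<Sum>p<d. (mv d A w p / nw)^2)"
      unfolding u_def using A
      by (intro sum.cong refl, subst mult_vec_entry) (auto simp: mv_def sum_divide_distrib)
    then show ?thesis by (simp add: power_divide sum_divide_distrib)
  qed
  then have "vnorm (A *\<^sub>v u) = sqrt (\<Sum>p<d. (mv d A w p)^2) / nw"
    using A nw0 unfolding vnorm_def by (simp add: real_sqrt_divide)
  with up nw0 have z: "sqrt (\<Sum>p<d. (mv d A w p)^2) \<le> op_norm A * nw"
    by (simp add: divide_le_eq)
  have "\<bar>bil d A w w\<bar> = sqrt ((\<Sum>p<d. w p * mv d A w p)^2)" by (simp add: bil_mv)
  also have "\<dots> \<le> sqrt (s * (\<Sum>p<d. (mv d A w p)^2))"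
    unfolding s_def by (intro real_sqrt_le_mono CS_sum)
  also have "\<dots> = nw * sqrt (\<Sum>p<d. (mv d A w p)^2)" unfolding nw_def by (simp add: real_sqrt_mult)
  also have "\<dots> \<le> nw * (op_norm A * nw)" using z nw0 by (intro mult_left_mono) auto
  also have "\<dots> = op_norm A * dotv d w w"
    using s0 unfolding nw_def s_def dotv_def by (simp add: power2_eq_square)
  finally show ?thesis .
qed




lemma Mk_carrier: "Mk d L nl lam v y k \<in> carrier_mat d d" by (simp add: Mk_def)

lemma Mk_sym: "\<forall>p<d. \<forall>q<d. Mk d L nl lam v y k $$ (p,q) = Mk d L nl lam v y k $$ (q,p)"
  by (simp add: Mk_def mult_ac)

lemma Deltak_carrier: "Q \<in> carrier_mat d K \<Longrightarrow> Deltak d K L nl Q lam v y k \<in> carrier_mat d d"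
  unfolding Deltak_def using Mk_carrier sigQ_carrier by (metis minus_carrier_mat smult_carrier_mat)

lemma Deltak_entry:
  assumes "Q \<in> carrier_mat d K"
  shows "\<forall>p<d. \<forall>q<d. Deltak d K L nl Q lam v y k $$ (p,q)
     = Mk d L nl lam v y k $$ (p,q) - acoef L nl lam v k * sigQ K Q lam $$ (p,q)"
  unfolding Deltak_def using carrier_matD[OF sigQ_carrier[OF assms, of lam]] by simp

lemma bil_Mk:
  assumes "Q \<in> carrier_mat d K"
  shows "bil d (Mk d L nl lam v y k) u w
     = acoef L nl lam v k * bil d (sigQ K Q lam) u w + bil d (Deltak d K L nl Q lam v y k) u w"
  using bil_lin[OF Deltak_entry[OF assms], where u=u and w=w] by simp

definition ftil :: "nat \<Rightarrow> nat \<Rightarrow> (nat \<Rightarrow> real mat) \<Rightarrow> real mat \<Rightarrow> real" where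
  "ftil d K M X = (\<Sum>k<K. bil d (M k) (colf X k) (colf X k))"

lemma ftil_g:
  assumes Q: "Q \<in> carrier_mat d K" and X: "X \<in> stiefel d K"
  shows "\<bar>ftil d K (Mk d L nl lam v y) X - gfun K L nl Q lam v X\<bar>
     \<le> (\<Sum>k<K. op_norm (Deltak d K L nl Q lam v y k))"
proof -
  have XC: "X \<in> carrier_mat d K" and Xo: "\<forall>k<K. dotv d (colf X k) (colf X k) = 1"
    using X by (auto simp: stiefel_iff)
  have "ftil d K (Mk d L nl lam v y) X - gfun K L nl Q lam v X
      = (\<Sum>k<K. bil d (Deltak d K L nl Q lam v y k) (colf X k) (colf X k))"
    unfolding ftil_def gfun_formula[OF Q XC] by (simp add: bil_Mk[OF Q] sum_subtractf sum.distrib)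
  also have "\<bar>\<dots>\<bar> \<le> (\<Sum>k<K. \<bar>bil d (Deltak d K L nl Q lam v y k) (colf X k) (colf X k)\<bar>)"
    by (rule sum_abs)
  also have "\<dots> \<le> (\<Sum>k<K. op_norm (Deltak d K L nl Q lam v y k))"
  proof (intro sum_mono)
    fix k assume k: "k \<in> {..<K}"
    show "\<bar>bil d (Deltak d K L nl Q lam v y k) (colf X k) (colf X k)\<bar> \<le> op_norm (Deltak d K L nl Q lam v y k)"
      using bil_op[OF Deltak_carrier[OF Q], where w="colf X k"] Xo k by simp
  qed
  finally show ?thesis .
qed

lemma sum_sq_diff:
  fixes f g :: "nat \<Rightarrow> real"
  shows "(\<Sum>i<d. (f i - g i)^2) = (\<Sum>i<d. (f i)^2) - 2 * (\<Sum>i<d. f i * g i) + (\<Sum>i<d. g i * g i)"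
proof -
  have "\<And>i. (f i - g i)^2 = (f i)^2 - 2*(f i * g i) + g i * g i" by (simp add: power2_eq_square algebra_simps)
  then show ?thesis by (simp add: sum.distrib sum_subtractf sum_distrib_left)
qed

lemma fro_stiefel:
  assumes Y: "Y \<in> carrier_mat d K" and Z: "Z \<in> stiefel d K"
  shows "(fro_norm (Y - Z))^2 = (\<Sum>k<K. \<Sum>i<d. (Y $$ (i,k))^2)
            - 2 * (\<Sum>k<K. dotv d (colf Y k) (colf Z k)) + real K"
proof -
  have ZC: "Z \<in> carrier_mat d K" and Zo: "\<forall>k<K. dotv d (colf Z k) (colf Z k) = 1"
    using Z by (auto simp: stiefel_iff)
  have "(fro_norm (Y - Z))^2 = (\<Sum>i<d. \<Sum>k<K. (Y $$ (i,k) - Z $$ (i,k))^2)"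
    unfolding fro_norm_def using Y ZC by (simp add: sum_nonneg)
  also have "\<dots> = (\<Sum>k<K. \<Sum>i<d. (Y $$ (i,k) - Z $$ (i,k))^2)" by (rule sum.swap)
  also have "\<dots> = (\<Sum>k<K. (\<Sum>i<d. (Y $$ (i,k))^2) - 2 * dotv d (colf Y k) (colf Z k) + dotv d (colf Z k) (colf Z k))"
    unfolding dotv_def colf_def
    by (intro sum.cong refl) (rule sum_sq_diff)
  also have "\<dots> = (\<Sum>k<K. (\<Sum>i<d. (Y $$ (i,k))^2) - 2 * dotv d (colf Y k) (colf Z k) + 1)"
    using Zo by (intro sum.cong refl) auto
  also have "\<dots> = (\<Sum>k<K. \<Sum>i<d. (Y $$ (i,k))^2) - 2 * (\<Sum>k<K. dotv d (colf Y k) (colf Z k)) + real K"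
    by (simp add: sum.distrib sum_subtractf sum_distrib_left)
  finally show ?thesis .
qed

lemma proj_ineq:
  assumes Y: "Y \<in> carrier_mat d K" and X: "X \<in> stiefel d K" and X': "X' \<in> proj_St d K Y"
  shows "(\<Sum>k<K. dotv d (colf Y k) (colf X k)) \<le> (\<Sum>k<K. dotv d (colf Y k) (colf X' k))"
proof -
  have X's: "X' \<in> stiefel d K" and le: "fro_norm (Y - X') \<le> fro_norm (Y - X)"
    using X' X unfolding proj_St_def by auto
  have "0 \<le> fro_norm (Y - X')" unfolding fro_norm_def by (intro real_sqrt_ge_zero sum_nonneg) auto
  then have "(fro_norm (Y - X'))^2 \<le> (fro_norm (Y - X))^2" using le by (intro power_mono) auto
  then show ?thesis unfolding fro_stiefel[OF Y X] fro_stiefel[OF Y X's] by simp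
qed

lemma colmap_carrier: "colmap d K M X \<in> carrier_mat d K" by (simp add: colmap_def)

lemma colmap_entry:
  assumes X: "X \<in> carrier_mat d K" and M: "\<forall>k. M k \<in> carrier_mat d d" and i: "i < d" and k: "k < K"
  shows "colmap d K M X $$ (i,k) = mv d (M k) (colf X k) i"
proof -
  have d1: "dim_row (M k) = d" "dim_col (M k) = d" using M by auto
  have d2: "dim_row X = d" "dim_col X = K" using X by auto
  have "colmap d K M X $$ (i,k) = row (M k) i \<bullet> col X k"
    unfolding colmap_def using i k d1 by simp
  also have "\<dots> = (\<Sum>q<d. M k $$ (i,q) * X $$ (q,k))"
    unfolding scalar_prod_def using d1 d2 i k by (simp add: atLeast0LessThan)
  finally show ?thesis unfolding mv_def colf_def .
qed

lemma step_mono: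
  assumes Q: "Q \<in> carrier_mat d K" and X: "X \<in> stiefel d K"
    and X': "X' \<in> proj_St d K (\<alpha> \<cdot>\<^sub>m X + colmap d K (Mk d L nl lam v y) X)"
    and al: "(\<Sum>k<K. op_norm (Deltak d K L nl Q lam v y k)) \<le> \<alpha>"
    and lam0: "\<forall>j<K. 0 \<le> lam j" and a0: "\<forall>k<K. 0 \<le> acoef L nl lam v k"
  shows "ftil d K (Mk d L nl lam v y) X \<le> ftil d K (Mk d L nl lam v y) X'"
proof -
  define M where "M = Mk d L nl lam v y"
  define D where "D = Deltak d K L nl Q lam v y"
  define Y where "Y = \<alpha> \<cdot>\<^sub>m X + colmap d K M X"
  define eps where "eps = (\<Sum>k<K. op_norm (D k))"
  define x where "x k = colf X k" for k
  define w where "w k = (\<lambda>i. colf X' k i - colf X k i)" for k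
  have XC: "X \<in> carrier_mat d K" and Xo: "\<forall>k<K. dotv d (x k) (x k) = 1"
    using X by (auto simp: stiefel_iff x_def)
  have X's: "X' \<in> stiefel d K" using X' unfolding proj_St_def by auto
  have X'o: "\<forall>k<K. dotv d (colf X' k) (colf X' k) = 1" using X's by (auto simp: stiefel_iff)
  have MC: "\<forall>k. M k \<in> carrier_mat d d" unfolding M_def by (simp add: Mk_carrier)
  have CC: "colmap d K M X \<in> carrier_mat d K" by (rule colmap_carrier)
  have YC: "Y \<in> carrier_mat d K" unfolding Y_def using XC CC by auto
  have Yent: "colf Y k i = \<alpha> * x k i + mv d (M k) (x k) i" if "i < d" "k < K" for i k
  proof -
    have "Y $$ (i,k) = (\<alpha> \<cdot>\<^sub>m X) $$ (i,k) + colmap d K M X $$ (i,k)"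
      unfolding Y_def using that carrier_matD[OF CC] by simp
    also have "\<dots> = \<alpha> * X $$ (i,k) + mv d (M k) (x k) i"
      using that carrier_matD[OF XC] colmap_entry[OF XC MC that] x_def by simp
    finally show ?thesis unfolding colf_def x_def by simp
  qed
  have dY: "dotv d (colf Y k) z = \<alpha> * dotv d (x k) z + bil d (M k) z (x k)" if "k < K" for k z
  proof -
    have "dotv d (colf Y k) z = (\<Sum>i<d. (\<alpha> * x k i + mv d (M k) (x k) i) * z i)"
      unfolding dotv_def using that by (intro sum.cong refl) (simp add: Yent)
    also have "\<dots> = \<alpha> * dotv d (x k) z + bil d (M k) z (x k)"
      unfolding dotv_def bil_def mv_def
      by (simp add: distrib_right distrib_left sum.distrib sum_distrib_left sum_distrib_right mult_ac)
    finally show ?thesis .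
  qed
  have pi: "(\<Sum>k<K. dotv d (colf Y k) (colf X k)) \<le> (\<Sum>k<K. dotv d (colf Y k) (colf X' k))"
    using proj_ineq[OF YC X] X' unfolding Y_def M_def by simp
  have dw: "dotv d (x k) (w k) = - dotv d (w k) (w k) / 2" if "k < K" for k
  proof -
    have "dotv d (w k) (w k) = dotv d (colf X' k) (colf X' k) - 2 * dotv d (x k) (colf X' k) + dotv d (x k) (x k)"
      unfolding w_def x_def dotv_def
      by (simp add: power2_diff sum.distrib sum_subtractf sum_distrib_left algebra_simps)
    moreover have "dotv d (x k) (w k) = dotv d (x k) (colf X' k) - dotv d (x k) (x k)"
      unfolding w_def x_def dotv_def by (simp add: right_diff_distrib sum_subtractf)
    ultimately show ?thesis using Xo X'o that x_def by simp
  qed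
  have sumpos: "0 \<le> (\<Sum>k<K. dotv d (colf Y k) (w k))"
  proof -
    have "(\<Sum>k<K. dotv d (colf Y k) (w k)) = (\<Sum>k<K. dotv d (colf Y k) (colf X' k)) - (\<Sum>k<K. dotv d (colf Y k) (colf X k))"
      unfolding w_def dotv_def by (simp add: right_diff_distrib sum_subtractf)
    then show ?thesis using pi by simp
  qed
  have bw: "\<alpha> / 2 * (\<Sum>k<K. dotv d (w k) (w k)) \<le> (\<Sum>k<K. bil d (M k) (w k) (x k))"
  proof -
    have "(\<Sum>k<K. dotv d (colf Y k) (w k)) = (\<Sum>k<K. - \<alpha> / 2 * dotv d (w k) (w k) + bil d (M k) (w k) (x k))"
      by (intro sum.cong refl) (simp add: dY dw)
    with sumpos show ?thesis by (simp add: sum.distrib sum_distrib_left sum_subtractf sum_divide_distrib)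
  qed
  have opk: "op_norm (D k) \<le> eps" if "k < K" for k
    unfolding eps_def using that op_norm_nonneg[OF Deltak_carrier[OF Q]] D_def
    by (intro member_le_sum) auto
  have ww: "- eps * dotv d (w k) (w k) \<le> bil d (M k) (w k) (w k)" if k: "k < K" for k
  proof -
    have s0: "0 \<le> bil d (sigQ K Q lam) (w k) (w k)"
      unfolding bil_sigQ[OF Q] using lam0 by (intro sum_nonneg) auto
    have dd: "0 \<le> dotv d (w k) (w k)" unfolding dotv_def by (simp add: sum_nonneg)
    have "\<bar>bil d (D k) (w k) (w k)\<bar> \<le> op_norm (D k) * dotv d (w k) (w k)"
      unfolding D_def by (rule bil_op[OF Deltak_carrier[OF Q]])
    also have "\<dots> \<le> eps * dotv d (w k) (w k)" using opk[OF k] dd by (rule mult_right_mono)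
    finally have "- eps * dotv d (w k) (w k) \<le> bil d (D k) (w k) (w k)" by simp
    moreover have "0 \<le> acoef L nl lam v k * bil d (sigQ K Q lam) (w k) (w k)"
      using a0 k s0 by simp
    ultimately show ?thesis unfolding M_def D_def bil_Mk[OF Q] by linarith
  qed
  have "ftil d K M X' - ftil d K M X = (\<Sum>k<K. 2 * bil d (M k) (w k) (x k) + bil d (M k) (w k) (w k))"
    unfolding ftil_def w_def x_def M_def
    by (simp add: sum_subtractf[symmetric] bil_expand[OF Mk_sym])
  also have "\<dots> = 2 * (\<Sum>k<K. bil d (M k) (w k) (x k)) + (\<Sum>k<K. bil d (M k) (w k) (w k))"
    by (simp add: sum.distrib sum_distrib_left)
  also have "\<dots> \<ge> \<alpha> * (\<Sum>k<K. dotv d (w k) (w k)) + (\<Sum>k<K. - eps * dotv d (w k) (w k))"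
    using bw ww by (intro add_mono sum_mono) auto
  finally have "\<alpha> * (\<Sum>k<K. dotv d (w k) (w k)) - eps * (\<Sum>k<K. dotv d (w k) (w k)) \<le> ftil d K M X' - ftil d K M X"
    by (simp add: sum_distrib_left sum_negf)
  moreover have "0 \<le> (\<alpha> - eps) * (\<Sum>k<K. dotv d (w k) (w k))"
    using al unfolding eps_def D_def by (intro mult_nonneg_nonneg) (auto simp: dotv_def intro!: sum_nonneg)
  ultimately show ?thesis unfolding M_def by (simp add: left_diff_distrib)
qed




lemma dotv_comm: "dotv d x y = dotv d y x" unfolding dotv_def by (simp add: mult.commute)

lemma bessel:
  assumes U: "U \<in> stiefel d K"
  shows "(\<Sum>j<K. (dotv d (colf U j) w)^2) \<le> dotv d w w"
proof -
  have UC: "U \<in> carrier_mat d K" and Uo: "\<forall>k<K. \<forall>k'<K. dotv d (colf U k) (colf U k') = (if k = k' then 1 else 0)"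
    using U by (auto simp: stiefel_iff)
  define c where "c j = dotv d (colf U j) w" for j
  define r where "r i = (\<Sum>j<K. c j * U $$ (i,j))" for i
  have wr: "(\<Sum>i<d. w i * r i) = (\<Sum>j<K. (c j)^2)"
  proof -
    have "(\<Sum>i<d. w i * r i) = (\<Sum>j<K. c j * (\<Sum>i<d. U $$ (i,j) * w i))"
      unfolding r_def by (simp add: sum_distrib_left sum_distrib_right sum.swap[of _ "{..<K}"] mult_ac)
    then show ?thesis unfolding c_def dotv_def colf_def by (simp add: power2_eq_square)
  qed
  have Ur: "(\<Sum>i<d. U $$ (i,j) * r i) = c j" if j: "j < K" for j
  proof -
    have "(\<Sum>i<d. U $$ (i,j) * r i) = (\<Sum>j'<K. c j' * dotv d (colf U j) (colf U j'))"
      unfolding r_def dotv_def colf_def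
      by (simp add: sum_distrib_left sum_distrib_right sum.swap[of _ "{..<K}"] mult_ac)
    also have "\<dots> = (\<Sum>j'<K. if j' = j then c j else 0)"
      using Uo j by (intro sum.cong refl) auto
    finally show ?thesis using j by simp
  qed
  have rr: "(\<Sum>i<d. r i * r i) = (\<Sum>j<K. (c j)^2)"
  proof -
    have e: "r i * r i = (\<Sum>j<K. c j * (U $$ (i,j) * r i))" for i
      by (subst (1) r_def) (simp add: sum_distrib_right sum_distrib_left mult_ac)
    have "(\<Sum>i<d. r i * r i) = (\<Sum>i<d. \<Sum>j<K. c j * (U $$ (i,j) * r i))"
      by (simp only: e)
    also have "\<dots> = (\<Sum>j<K. \<Sum>i<d. c j * (U $$ (i,j) * r i))" by (rule sum.swap)
    also have "\<dots> = (\<Sum>j<K. c j * (\<Sum>i<d. U $$ (i,j) * r i))" by (simp add: sum_distrib_left)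
    also have "\<dots> = (\<Sum>j<K. (c j)^2)" by (intro sum.cong refl) (simp add: Ur power2_eq_square)
    finally show ?thesis .
  qed
  have "0 \<le> (\<Sum>i<d. (w i - r i)^2)" by (simp add: sum_nonneg)
  also have "\<dots> = dotv d w w - (\<Sum>j<K. (c j)^2)"
    unfolding sum_sq_diff wr rr dotv_def by (simp add: power2_eq_square)
  finally show ?thesis unfolding c_def by simp
qed

lemma P_row:
  assumes Q: "Q \<in> stiefel d K" and X: "X \<in> stiefel d K" and j: "j < K"
  shows "(\<Sum>k<K. (dotv d (colf Q j) (colf X k))^2) \<le> 1"
proof -
  have "(\<Sum>k<K. (dotv d (colf X k) (colf Q j))^2) \<le> dotv d (colf Q j) (colf Q j)"
    by (rule bessel[OF X])
  then show ?thesis using Q j by (simp add: stiefel_iff dotv_comm)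
qed

lemma P_col:
  assumes Q: "Q \<in> stiefel d K" and X: "X \<in> stiefel d K" and k: "k < K"
  shows "(\<Sum>j<K. (dotv d (colf Q j) (colf X k))^2) \<le> 1"
  using bessel[OF Q, of "colf X k"] X k by (simp add: stiefel_iff)

lemma G_formula:
  assumes Q: "Q \<in> stiefel d K" and X: "X \<in> stiefel d K"
  shows "gfun K L nl Q lam v Q - gfun K L nl Q lam v X
    = (\<Sum>k<K. acoef L nl lam v k * lam k)
      - (\<Sum>k<K. acoef L nl lam v k * (\<Sum>j<K. lam j * (dotv d (colf Q j) (colf X k))^2))"
proof -
  have QC: "Q \<in> carrier_mat d K" and Qo: "\<forall>k<K. \<forall>k'<K. dotv d (colf Q k) (colf Q k') = (if k = k' then 1 else 0)"
    using Q by (auto simp: stiefel_iff)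
  have XC: "X \<in> carrier_mat d K" using X by (auto simp: stiefel_iff)
  have "gfun K L nl Q lam v Q = (\<Sum>k<K. acoef L nl lam v k * (\<Sum>j<K. lam j * (dotv d (colf Q j) (colf Q k))^2))"
    unfolding gfun_formula[OF QC QC] bil_sigQ[OF QC] ..
  also have "\<dots> = (\<Sum>k<K. acoef L nl lam v k * lam k)"
  proof (intro sum.cong refl)
    fix k assume k: "k \<in> {..<K}"
    have "(\<Sum>j<K. lam j * (dotv d (colf Q j) (colf Q k))^2) = (\<Sum>j<K. if j = k then lam k else 0)"
      using Qo k by (intro sum.cong refl) auto
    then show "acoef L nl lam v k * (\<Sum>j<K. lam j * (dotv d (colf Q j) (colf Q k))^2) = acoef L nl lam v k * lam k"
      using k by simp
  qed
  finally show ?thesis unfolding gfun_formula[OF QC XC] bil_sigQ[OF QC] by simp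
qed

definition sgnl :: "nat \<Rightarrow> real mat \<Rightarrow> real mat \<Rightarrow> real list" where
  "sgnl K X Q = map (\<lambda>k. if 0 \<le> dotv (dim_row Q) (colf Q k) (colf X k) then 1 else -1) [0..<K]"

lemma dF_set_finite:
  "finite {fro_norm (X - Q * diag_of K (\<lambda>k. q ! k)) | q. length q = K \<and> set q \<subseteq> {-1, 1}}"
proof -
  have "finite {q :: real list. set q \<subseteq> {-1,1} \<and> length q = K}"
    by (rule finite_lists_length_eq) auto
  then have "finite {q :: real list. length q = K \<and> set q \<subseteq> {-1,1}}"
    by (simp add: conj_commute)
  then show ?thesis by (simp add: setcompr_eq_image)
qed

lemma dF_le:
  assumes "length q = K" "set q \<subseteq> {-1, 1}"
  shows "dF K X Q \<le> fro_norm (X - Q * diag_of K (\<lambda>k. q ! k))"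
  unfolding dF_def using assms dF_set_finite by (intro Min_le) auto

lemma dF_in:
  "\<exists>q. length q = K \<and> set q \<subseteq> {-1, 1} \<and> dF K X Q = fro_norm (X - Q * diag_of K (\<lambda>k. q ! k))"
proof -
  have ne: "{fro_norm (X - Q * diag_of K (\<lambda>k. q ! k)) | q. length q = K \<and> set q \<subseteq> {-1, 1}} \<noteq> {}"
    by (auto intro!: exI[of _ "replicate K 1"])
  show ?thesis using Min_in[OF dF_set_finite ne] unfolding dF_def by auto
qed

lemma fro_nonneg: "0 \<le> fro_norm A"
  unfolding fro_norm_def by (intro real_sqrt_ge_zero sum_nonneg) auto

lemma dF_nonneg: "0 \<le> dF K X Q"
  using dF_in[of K X Q] fro_nonneg by metis

lemma fro_QD:
  assumes XC: "X \<in> carrier_mat d K" and QC: "Q \<in> carrier_mat d K"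
  shows "(fro_norm (X - Q * diag_of K f))^2 = (\<Sum>k<K. \<Sum>i<d. (X $$ (i,k) - Q $$ (i,k) * f k)^2)"
proof -
  have QD: "Q * diag_of K f \<in> carrier_mat d K" using QC diag_carrier by auto
  have dr: "dim_row (X - Q * diag_of K f) = d" and dc: "dim_col (X - Q * diag_of K f) = K"
    using QD by auto
  have "(fro_norm (X - Q * diag_of K f))^2 = (\<Sum>i<d. \<Sum>k<K. ((X - Q * diag_of K f) $$ (i,k))^2)"
    unfolding fro_norm_def dr dc by (intro real_sqrt_pow2 sum_nonneg) auto
  also have "\<dots> = (\<Sum>i<d. \<Sum>k<K. (X $$ (i,k) - Q $$ (i,k) * f k)^2)"
  proof (intro sum.cong refl)
    fix i k assume i: "i \<in> {..<d}" and k: "k \<in> {..<K}"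
    have "(X - Q * diag_of K f) $$ (i,k) = X $$ (i,k) - (Q * diag_of K f) $$ (i,k)"
      using i k carrier_matD[OF QD] by (intro index_minus_mat(1)) auto
    then show "((X - Q * diag_of K f) $$ (i,k))^2 = (X $$ (i,k) - Q $$ (i,k) * f k)^2"
      using mult_diag_entry[OF QC, of i k f] i k by simp
  qed
  finally show ?thesis by (simp add: sum.swap[of _ "{..<d}"])
qed

lemma dF_bound:
  assumes Q: "Q \<in> stiefel d K" and X: "X \<in> stiefel d K"
  shows "(dF K X Q)^2 \<le> 2 * (\<Sum>k<K. 1 - (dotv d (colf Q k) (colf X k))^2)"
proof -
  have QC: "Q \<in> carrier_mat d K" and Qo: "\<forall>k<K. dotv d (colf Q k) (colf Q k) = 1"
    using Q by (auto simp: stiefel_iff)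
  have XC: "X \<in> carrier_mat d K" and Xo: "\<forall>k<K. dotv d (colf X k) (colf X k) = 1"
    using X by (auto simp: stiefel_iff)
  define t where "t k = dotv d (colf Q k) (colf X k)" for k
  define q where "q = sgnl K X Q"
  have lq: "length q = K" and sq: "set q \<subseteq> {-1,1}" unfolding q_def sgnl_def by auto
  have qk: "q ! k = (if 0 \<le> t k then 1 else -1)" if "k < K" for k
    unfolding q_def sgnl_def t_def using that QC by simp
  have t1: "(t k)^2 \<le> 1" if k: "k < K" for k
  proof -
    have "(t k)^2 \<le> (\<Sum>j<K. (dotv d (colf Q j) (colf X k))^2)"
      unfolding t_def using k by (intro member_le_sum[where f="\<lambda>j. (dotv d (colf Q j) (colf X k))^2"]) auto
    then show ?thesis using P_col[OF Q X k] by simp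
  qed
  have col: "(\<Sum>i<d. (X $$ (i,k) - Q $$ (i,k) * q ! k)^2) \<le> 2 * (1 - (t k)^2)" if k: "k < K" for k
  proof -
    have sq1: "(q ! k) * (q ! k) = 1" using qk[OF k] by simp
    have "(\<Sum>i<d. (X $$ (i,k) - Q $$ (i,k) * q ! k)^2)
        = dotv d (colf X k) (colf X k) - 2 * (q ! k) * t k + (q ! k * q ! k) * dotv d (colf Q k) (colf Q k)"
      unfolding sum_sq_diff dotv_def colf_def t_def
      by (simp add: power2_eq_square sum_distrib_left mult_ac)
    also have "\<dots> = 2 - 2 * \<bar>t k\<bar>" using Xo Qo k sq1 qk[OF k] by auto
    also have "\<dots> \<le> 2 * (1 - (t k)^2)"
    proof -
      have a1: "\<bar>t k\<bar> \<le> 1" using t1[OF k] by (simp add: abs_square_le_1)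
      have "(t k)^2 = \<bar>t k\<bar> * \<bar>t k\<bar>" by (simp add: power2_eq_square)
      also have "\<dots> \<le> \<bar>t k\<bar>" using a1 by (intro mult_left_le) auto
      finally have "(t k)^2 \<le> \<bar>t k\<bar>" .
      then show ?thesis by simp
    qed
    finally show ?thesis .
  qed
  have "(dF K X Q)^2 \<le> (fro_norm (X - Q * diag_of K (\<lambda>k. q ! k)))^2"
    using dF_le[OF lq sq, of X Q] dF_nonneg by (intro power_mono) auto
  also have "\<dots> = (\<Sum>k<K. \<Sum>i<d. (X $$ (i,k) - Q $$ (i,k) * q ! k)^2)" by (rule fro_QD[OF XC QC])
  also have "\<dots> \<le> (\<Sum>k<K. 2 * (1 - (t k)^2))" by (intro sum_mono col) auto
  finally show ?thesis unfolding t_def by (simp add: sum_distrib_left)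
qed




lemma wl: fixes x y v :: real assumes "0 < x" "x < y" "0 < v" shows "x / (x + v) < y / (y + v)"
proof -
  have "x * (y + v) < y * (x + v)" using assms by (simp add: algebra_simps)
  then show ?thesis using assms by (simp add: divide_less_eq less_divide_eq field_simps)
qed

lemma ntot_pos:
  assumes "1 \<le> L" "\<forall>l<L. 1 \<le> nl l" shows "0 < ntot L nl"
proof -
  have "nl 0 \<le> ntot L nl" unfolding ntot_def using assms by (intro member_le_sum) auto
  then show ?thesis using assms by auto
qed

lemma acoef_props:
  assumes lam_dec: "\<forall>i j. i < j \<and> j < K \<longrightarrow> lam j < lam i" and lam_pos: "\<forall>k<K. 0 < lam k"
    and L1: "1 \<le> L" and nl1: "\<forall>l<L. 1 \<le> nl l" and v_pos: "\<forall>l<L. 0 < v l"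
  shows "\<forall>i j. i < j \<and> j < K \<longrightarrow> acoef L nl lam v j < acoef L nl lam v i"
    and "\<forall>k<K. 0 < acoef L nl lam v k"
proof -
  have n0: "0 < real (ntot L nl)" using ntot_pos[OF L1 nl1] by simp
  have ne: "{..<L} \<noteq> {}" using L1 by (auto simp: lessThan_empty_iff)
  have pf: "0 < real (nl l) / real (ntot L nl) * (1 / v l)" if "l < L" for l
    using n0 nl1 v_pos that by (intro mult_pos_pos divide_pos_pos) auto
  show "\<forall>i j. i < j \<and> j < K \<longrightarrow> acoef L nl lam v j < acoef L nl lam v i"
  proof (intro allI impI)
    fix i j assume ij: "i < j \<and> j < K"
    show "acoef L nl lam v j < acoef L nl lam v i"
      unfolding acoef_def
    proof (rule sum_strict_mono[OF _ ne])
      fix l assume l: "l \<in> {..<L}"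
      have "wgt lam v l j < wgt lam v l i" unfolding wgt_def
        using ij lam_dec lam_pos v_pos l by (intro wl) auto
      then have "wgt lam v l j * (real (nl l) / real (ntot L nl) * (1 / v l))
          < wgt lam v l i * (real (nl l) / real (ntot L nl) * (1 / v l))"
        using pf l by (intro mult_strict_right_mono) auto
      then show "wgt lam v l j * (real (nl l) / real (ntot L nl)) * (1 / v l)
          < wgt lam v l i * (real (nl l) / real (ntot L nl)) * (1 / v l)" by (simp add: mult.assoc)
    qed auto
  qed
  show "\<forall>k<K. 0 < acoef L nl lam v k"
  proof (intro allI impI)
    fix k assume k: "k < K"
    show "0 < acoef L nl lam v k" unfolding acoef_def
    proof (rule sum_pos)
      fix l assume l: "l \<in> {..<L}"
      have "0 < wgt lam v l k" unfolding wgt_def using lam_pos v_pos k l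
        by (intro divide_pos_pos add_pos_pos) auto
      then show "0 < wgt lam v l k * (real (nl l) / real (ntot L nl)) * (1 / v l)"
        using pf[of l] l mult_pos_pos[of "wgt lam v l k" "real (nl l) / real (ntot L nl) * (1 / v l)"] by (simp only: mult.assoc) auto
    qed (use ne in auto)
  qed
qed

lemma sign_stuff:
  assumes Q: "Q \<in> stiefel d K" and lq: "length q = K" and sq: "set q \<subseteq> {-1, 1}"
  shows "Q * diag_of K (\<lambda>k. q ! k) \<in> stiefel d K"
    and "gfun K L nl Q lam v (Q * diag_of K (\<lambda>k. q ! k)) = gfun K L nl Q lam v Q"
proof -
  define f where "f k = q ! k" for k
  define QD where "QD = Q * diag_of K f"
  have QC: "Q \<in> carrier_mat d K" and Qo: "\<forall>k<K. \<forall>k'<K. dotv d (colf Q k) (colf Q k') = (if k = k' then 1 else 0)"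
    using Q by (auto simp: stiefel_iff)
  have QDC: "QD \<in> carrier_mat d K" unfolding QD_def using QC diag_carrier by auto
  have f2: "f k * f k = 1" if "k < K" for k
  proof -
    have "q ! k \<in> set q" using that lq by simp
    then have "f k \<in> {-1,1}" using sq f_def by auto
    then show ?thesis by auto
  qed
  have dq: "dotv d z (colf QD k) = f k * dotv d z (colf Q k)" if k: "k < K" for z k
    unfolding dotv_def colf_def QD_def using mult_diag_entry[OF QC _ k]
    by (simp add: sum_distrib_left mult_ac)
  have st: "QD \<in> stiefel d K"
    unfolding stiefel_iff
  proof (intro conjI QDC allI impI)
    fix j k assume j: "j < K" and k: "k < K"
    have "dotv d (colf QD j) (colf QD k) = f k * (f j * dotv d (colf Q j) (colf Q k))"
      using dq[OF k, of "colf QD j"] dq[OF j, of "colf Q k"] by (simp add: dotv_comm)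
    then show "dotv d (colf QD j) (colf QD k) = (if j = k then 1 else 0)"
      using Qo j k f2[OF k] by (auto simp: mult_ac)
  qed
  then show "Q * diag_of K (\<lambda>k. q ! k) \<in> stiefel d K" unfolding QD_def f_def by simp
  have "gfun K L nl Q lam v Q - gfun K L nl Q lam v QD = 0"
    unfolding G_formula[OF Q st]
  proof -
    have "(\<Sum>k<K. acoef L nl lam v k * (\<Sum>j<K. lam j * (dotv d (colf Q j) (colf QD k))^2))
        = (\<Sum>k<K. acoef L nl lam v k * lam k)"
    proof (intro sum.cong refl)
      fix k assume k: "k \<in> {..<K}"
      have "(\<Sum>j<K. lam j * (dotv d (colf Q j) (colf QD k))^2) = (\<Sum>j<K. if j = k then lam k else 0)"
        using Qo k f2[of k] by (intro sum.cong refl) (auto simp: dq power2_eq_square)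
      then show "acoef L nl lam v k * (\<Sum>j<K. lam j * (dotv d (colf Q j) (colf QD k))^2) = acoef L nl lam v k * lam k"
        using k by simp
    qed
    then show "(\<Sum>k<K. acoef L nl lam v k * lam k) - (\<Sum>k<K. acoef L nl lam v k * (\<Sum>j<K. lam j * (dotv d (colf Q j) (colf QD k))^2)) = 0"
      by simp
  qed
  then show "gfun K L nl Q lam v (Q * diag_of K (\<lambda>k. q ! k)) = gfun K L nl Q lam v Q"
    unfolding QD_def f_def by simp
qed

lemma fro_swap:
  assumes "A \<in> carrier_mat n m" "B \<in> carrier_mat n m"
  shows "fro_norm (A - B) = fro_norm (B - A)"
proof -
  have "(\<Sum>i<n. \<Sum>j<m. ((A - B) $$ (i,j))^2) = (\<Sum>i<n. \<Sum>j<m. ((B - A) $$ (i,j))^2)"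
    using assms by (intro sum.cong refl) (simp add: power2_commute)
  then show ?thesis unfolding fro_norm_def using assms by simp
qed

lemma lip_bound:
  assumes Q: "Q \<in> stiefel d K" and X: "X \<in> stiefel d K"
    and lip: "\<forall>A \<in> stiefel d K. \<forall>B \<in> stiefel d K.
                \<bar>gfun K L nl Q lam v A - gfun K L nl Q lam v B\<bar> \<le> Lg * fro_norm (A - B)"
  shows "gfun K L nl Q lam v Q - gfun K L nl Q lam v X \<le> Lg * dF K X Q"
proof -
  obtain q where lq: "length q = K" and sq: "set q \<subseteq> {-1, 1}"
    and e: "dF K X Q = fro_norm (X - Q * diag_of K (\<lambda>k. q ! k))" using dF_in by blast
  define QD where "QD = Q * diag_of K (\<lambda>k. q ! k)"
  have st: "QD \<in> stiefel d K" and gq: "gfun K L nl Q lam v QD = gfun K L nl Q lam v Q"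
    using sign_stuff[OF Q lq sq] unfolding QD_def by auto
  have "gfun K L nl Q lam v Q - gfun K L nl Q lam v X \<le> \<bar>gfun K L nl Q lam v QD - gfun K L nl Q lam v X\<bar>"
    using gq by simp
  also have "\<dots> \<le> Lg * fro_norm (QD - X)" using lip st X by blast
  also have "fro_norm (QD - X) = dF K X Q" unfolding e QD_def
    using st X by (intro fro_swap) (auto simp: stiefel_def QD_def)
  finally show ?thesis .
qed

lemma quad_growth:
  assumes Q: "Q \<in> stiefel d K" and X: "X \<in> stiefel d K"
    and lam_dec: "\<forall>i j. i < j \<and> j < K \<longrightarrow> lam j < lam i" and lam_pos: "\<forall>k<K. 0 < lam k"
    and a_dec: "\<forall>i j. i < j \<and> j < K \<longrightarrow> acoef L nl lam v j < acoef L nl lam v i"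
    and a_pos: "\<forall>k<K. 0 < acoef L nl lam v k" and K1: "1 \<le> K"
  shows "mu K (acoef L nl lam v) lam / 4 * (dF K X Q)^2 \<le> gfun K L nl Q lam v Q - gfun K L nl Q lam v X"
proof -
  define P where "P j k = (dotv d (colf Q j) (colf X k))^2" for j k
  have c: "mu K (acoef L nl lam v) lam / 2 * (\<Sum>k<K. 1 - P k k)
     \<le> (\<Sum>k<K. acoef L nl lam v k * lam k) - (\<Sum>k<K. acoef L nl lam v k * (\<Sum>j<K. lam j * P j k))"
    using P_row[OF Q X] P_col[OF Q X] unfolding P_def
    by (intro comb[OF a_dec a_pos lam_dec lam_pos K1]) auto
  have m0: "0 < mu K (acoef L nl lam v) lam" by (rule mu_pos[OF a_dec a_pos lam_dec lam_pos K1])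
  have "mu K (acoef L nl lam v) lam / 4 * (dF K X Q)^2 \<le> mu K (acoef L nl lam v) lam / 4 * (2 * (\<Sum>k<K. 1 - P k k))"
    using dF_bound[OF Q X] m0 unfolding P_def by (intro mult_left_mono) auto
  also have "\<dots> = mu K (acoef L nl lam v) lam / 2 * (\<Sum>k<K. 1 - P k k)" by simp
  finally have h: "mu K (acoef L nl lam v) lam / 4 * (dF K X Q)^2 \<le> mu K (acoef L nl lam v) lam / 2 * (\<Sum>k<K. 1 - P k k)" .
  have "mu K (acoef L nl lam v) lam / 4 * (dF K X Q)^2
     \<le> (\<Sum>k<K. acoef L nl lam v k * lam k) - (\<Sum>k<K. acoef L nl lam v k * (\<Sum>j<K. lam j * P j k))"
    using order_trans[OF h c] .
  then show ?thesis unfolding G_formula[OF Q X] P_def .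
qed




theorem proposition2:
  fixes d K L :: nat and Q :: "real mat" and lam v :: "nat \<Rightarrow> real" and nl :: "nat \<Rightarrow> nat"
  assumes "1 \<le> K" and "K < d" and "Q \<in> stiefel d K"
    and "\<forall>i j. i < j \<and> j < K \<longrightarrow> lam j < lam i" and "\<forall>k<K. 0 < lam k"
    and "1 \<le> L" and "\<forall>l<L. 1 \<le> nl l"
    and "\<forall>i j. i < j \<and> j < L \<longrightarrow> v j < v i" and "\<forall>l<L. 0 < v l"
  shows "\<exists>\<delta> \<eta>bar. 0 < \<delta> \<and> \<delta> < sqrt 2 / 2
      \<and> lam (K-1) * acoef L nl lam v (K-1) - lam 0 * acoef L nl lam v 0 * \<delta> > 0
      \<and> 0 < \<eta>bar
      \<and> (\<forall>X \<in> stiefel d K. gfun K L nl Q lam v Q - gfun K L nl Q lam v X \<ge> \<eta>bar * (dF K X Q)^2)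
      \<and> (\<forall>\<alpha>. 0 < \<alpha> \<and> \<alpha> < lam (K-1) * acoef L nl lam v (K-1) - lam 0 * acoef L nl lam v 0 * \<delta> \<longrightarrow>
          (\<exists>\<gamma>. 0 < \<gamma> \<and> \<gamma> < 1 \<and>
            (\<forall>(y :: nat \<Rightarrow> nat \<Rightarrow> real vec) (Lg :: real) (X :: nat \<Rightarrow> real mat).
               let \<delta>1 = \<delta>^2 * \<eta>bar;
                   c = lam (K-1) * acoef L nl lam v (K-1) - lam 0 * acoef L nl lam v 0 * \<delta> - \<alpha>
               in ((\<forall>l<L. \<forall>i<nl l. y l i \<in> carrier_vec d)
                   \<and> 0 < Lg
                   \<and> (\<forall>A \<in> stiefel d K. \<forall>B \<in> stiefel d K.
                        \<bar>gfun K L nl Q lam v A - gfun K L nl Q lam v B\<bar> \<le> Lg * fro_norm (A - B))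
                   \<and> X 0 \<in> stiefel d K
                   \<and> gfun K L nl Q lam v Q - gfun K L nl Q lam v (X 0) \<le> \<delta>1
                   \<and> (\<Sum>k<K. op_norm (Deltak d K L nl Q lam v y k))
                        \<le> 2 * c * (1 - \<gamma>) * \<delta>1 / (2 * Lg + (1 - \<gamma>) * \<delta>1)
                   \<and> (\<forall>t. X (Suc t) \<in> proj_St d K (\<alpha> \<cdot>\<^sub>m X t + colmap d K (Mk d L nl lam v y) (X t))))
                  \<longrightarrow> (\<forall>t. dF K (X t) Q \<le> \<delta>))))"
proof -
  note K1 = assms(1) and Q = assms(3) and lam_dec = assms(4) and lam_pos = assms(5)
  have QC: "Q \<in> carrier_mat d K" using Q by (simp add: stiefel_def)
  have a_dec: "\<forall>i j. i < j \<and> j < K \<longrightarrow> acoef L nl lam v j < acoef L nl lam v i"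
   and a_pos: "\<forall>k<K. 0 < acoef L nl lam v k"
    using acoef_props[OF assms(4,5,6,7,9)] by auto
  define \<eta>0 where "\<eta>0 = mu K (acoef L nl lam v) lam / 4"
  have e0: "0 < \<eta>0" unfolding \<eta>0_def using mu_pos[OF a_dec a_pos lam_dec lam_pos K1] by simp
  have QG: "\<eta>0 * (dF K X Q)^2 \<le> gfun K L nl Q lam v Q - gfun K L nl Q lam v X" if "X \<in> stiefel d K" for X
    unfolding \<eta>0_def using quad_growth[OF Q that lam_dec lam_pos a_dec a_pos K1] .
  define A1 where "A1 = lam (K-1) * acoef L nl lam v (K-1)"
  define B1 where "B1 = lam 0 * acoef L nl lam v 0"
  have A1p: "0 < A1" unfolding A1_def using K1 lam_pos a_pos by simp
  have B1p: "0 < B1" unfolding B1_def using K1 lam_pos a_pos by simp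
  define \<delta> where "\<delta> = min (1/2) (A1 / (2 * B1))"
  have d0: "0 < \<delta>" unfolding \<delta>_def using A1p B1p by simp
  have d1: "\<delta> < sqrt 2 / 2"
  proof -
    have "(1::real)/2 < sqrt 2 / 2" by (simp add: real_less_rsqrt)
    then show ?thesis unfolding \<delta>_def by linarith
  qed
  have c0: "0 < A1 - B1 * \<delta>"
  proof -
    have "B1 * \<delta> \<le> B1 * (A1 / (2 * B1))" unfolding \<delta>_def using B1p by (intro mult_left_mono) auto
    also have "\<dots> = A1 / 2" using B1p by simp
    finally show ?thesis using A1p by simp
  qed
  define \<eta>b where "\<eta>b = \<eta>0 / 2"
  show ?thesis
  proof (rule exI[of _ \<delta>], rule exI[of _ \<eta>b], intro conjI)
    show "0 < \<delta>" by (rule d0)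
    show "\<delta> < sqrt 2 / 2" by (rule d1)
    show "lam (K-1) * acoef L nl lam v (K-1) - lam 0 * acoef L nl lam v 0 * \<delta> > 0"
      using c0 unfolding A1_def B1_def by simp
    show "0 < \<eta>b" using e0 \<eta>b_def by simp
    show "\<forall>X \<in> stiefel d K. gfun K L nl Q lam v Q - gfun K L nl Q lam v X \<ge> \<eta>b * (dF K X Q)^2"
    proof
      fix X assume X: "X \<in> stiefel d K"
      have "\<eta>b * (dF K X Q)^2 \<le> \<eta>0 * (dF K X Q)^2" unfolding \<eta>b_def using e0
        by (intro mult_right_mono) auto
      then show "gfun K L nl Q lam v Q - gfun K L nl Q lam v X \<ge> \<eta>b * (dF K X Q)^2"
        using QG[OF X] by simp
    qed
    show "\<forall>\<alpha>. 0 < \<alpha> \<and> \<alpha> < lam (K-1) * acoef L nl lam v (K-1) - lam 0 * acoef L nl lam v 0 * \<delta> \<longrightarrow>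
          (\<exists>\<gamma>. 0 < \<gamma> \<and> \<gamma> < 1 \<and>
            (\<forall>(y :: nat \<Rightarrow> nat \<Rightarrow> real vec) (Lg :: real) (X :: nat \<Rightarrow> real mat).
               let \<delta>1 = \<delta>^2 * \<eta>b;
                   c = lam (K-1) * acoef L nl lam v (K-1) - lam 0 * acoef L nl lam v 0 * \<delta> - \<alpha>
               in ((\<forall>l<L. \<forall>i<nl l. y l i \<in> carrier_vec d)
                   \<and> 0 < Lg
                   \<and> (\<forall>A \<in> stiefel d K. \<forall>B \<in> stiefel d K.
                        \<bar>gfun K L nl Q lam v A - gfun K L nl Q lam v B\<bar> \<le> Lg * fro_norm (A - B))
                   \<and> X 0 \<in> stiefel d K
                   \<and> gfun K L nl Q lam v Q - gfun K L nl Q lam v (X 0) \<le> \<delta>1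
                   \<and> (\<Sum>k<K. op_norm (Deltak d K L nl Q lam v y k))
                        \<le> 2 * c * (1 - \<gamma>) * \<delta>1 / (2 * Lg + (1 - \<gamma>) * \<delta>1)
                   \<and> (\<forall>t. X (Suc t) \<in> proj_St d K (\<alpha> \<cdot>\<^sub>m X t + colmap d K (Mk d L nl lam v y) (X t))))
                  \<longrightarrow> (\<forall>t. dF K (X t) Q \<le> \<delta>)))"
    proof (intro allI impI)
      fix \<alpha> assume al: "0 < \<alpha> \<and> \<alpha> < lam (K-1) * acoef L nl lam v (K-1) - lam 0 * acoef L nl lam v 0 * \<delta>"
      define c where "c = A1 - B1 * \<delta> - \<alpha>"
      have cp: "0 < c" using al unfolding c_def A1_def B1_def by simp
      define \<delta>1 where "\<delta>1 = \<delta>^2 * \<eta>b"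
      have dl1: "0 < \<delta>1" unfolding \<delta>1_def \<eta>b_def using d0 e0 by simp
      define s where "s = min (1/2) (min (\<alpha> * \<eta>0 * \<delta> / (c * \<delta>1)) (\<eta>0 * \<delta> / (2 * c)))"
      have s0: "0 < s" unfolding s_def using al e0 d0 cp dl1 by simp
      have s1: "s \<le> 1/2" unfolding s_def by (rule min.cobounded1)
      have s2: "s * (c * \<delta>1) \<le> \<alpha> * \<eta>0 * \<delta>"
      proof -
        have "s \<le> \<alpha> * \<eta>0 * \<delta> / (c * \<delta>1)" unfolding s_def by simp
        then show ?thesis using cp dl1 by (simp add: pos_le_divide_eq)
      qed
      have s3: "s * (2 * c) \<le> \<eta>0 * \<delta>"
      proof -
        have "s \<le> \<eta>0 * \<delta> / (2 * c)" unfolding s_def by simp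
        then show ?thesis using cp by (simp add: pos_le_divide_eq)
      qed
      show "\<exists>\<gamma>. 0 < \<gamma> \<and> \<gamma> < 1 \<and>
            (\<forall>(y :: nat \<Rightarrow> nat \<Rightarrow> real vec) (Lg :: real) (X :: nat \<Rightarrow> real mat).
               let \<delta>1 = \<delta>^2 * \<eta>b;
                   c = lam (K-1) * acoef L nl lam v (K-1) - lam 0 * acoef L nl lam v 0 * \<delta> - \<alpha>
               in ((\<forall>l<L. \<forall>i<nl l. y l i \<in> carrier_vec d)
                   \<and> 0 < Lg
                   \<and> (\<forall>A \<in> stiefel d K. \<forall>B \<in> stiefel d K.
                        \<bar>gfun K L nl Q lam v A - gfun K L nl Q lam v B\<bar> \<le> Lg * fro_norm (A - B))
                   \<and> X 0 \<in> stiefel d K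
                   \<and> gfun K L nl Q lam v Q - gfun K L nl Q lam v (X 0) \<le> \<delta>1
                   \<and> (\<Sum>k<K. op_norm (Deltak d K L nl Q lam v y k))
                        \<le> 2 * c * (1 - \<gamma>) * \<delta>1 / (2 * Lg + (1 - \<gamma>) * \<delta>1)
                   \<and> (\<forall>t. X (Suc t) \<in> proj_St d K (\<alpha> \<cdot>\<^sub>m X t + colmap d K (Mk d L nl lam v y) (X t))))
                  \<longrightarrow> (\<forall>t. dF K (X t) Q \<le> \<delta>))"
      proof (intro exI[of _ "1 - s"] conjI allI)
        show "0 < 1 - s" using s1 by simp
        show "1 - s < 1" using s0 by simp
        fix y :: "nat \<Rightarrow> nat \<Rightarrow> real vec" and Lg :: real and X :: "nat \<Rightarrow> real mat"
        show "let \<delta>1 = \<delta>^2 * \<eta>b;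
                   c = lam (K-1) * acoef L nl lam v (K-1) - lam 0 * acoef L nl lam v 0 * \<delta> - \<alpha>
               in ((\<forall>l<L. \<forall>i<nl l. y l i \<in> carrier_vec d)
                   \<and> 0 < Lg
                   \<and> (\<forall>A \<in> stiefel d K. \<forall>B \<in> stiefel d K.
                        \<bar>gfun K L nl Q lam v A - gfun K L nl Q lam v B\<bar> \<le> Lg * fro_norm (A - B))
                   \<and> X 0 \<in> stiefel d K
                   \<and> gfun K L nl Q lam v Q - gfun K L nl Q lam v (X 0) \<le> \<delta>1
                   \<and> (\<Sum>k<K. op_norm (Deltak d K L nl Q lam v y k))
                        \<le> 2 * c * (1 - (1 - s)) * \<delta>1 / (2 * Lg + (1 - (1 - s)) * \<delta>1)
                   \<and> (\<forall>t. X (Suc t) \<in> proj_St d K (\<alpha> \<cdot>\<^sub>m X t + colmap d K (Mk d L nl lam v y) (X t))))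
                  \<longrightarrow> (\<forall>t. dF K (X t) Q \<le> \<delta>)"
          unfolding Let_def
        proof (intro impI allI)
          fix t
          assume H: "(\<forall>l<L. \<forall>i<nl l. y l i \<in> carrier_vec d)
                   \<and> 0 < Lg
                   \<and> (\<forall>A \<in> stiefel d K. \<forall>B \<in> stiefel d K.
                        \<bar>gfun K L nl Q lam v A - gfun K L nl Q lam v B\<bar> \<le> Lg * fro_norm (A - B))
                   \<and> X 0 \<in> stiefel d K
                   \<and> gfun K L nl Q lam v Q - gfun K L nl Q lam v (X 0) \<le> \<delta>^2 * \<eta>b
                   \<and> (\<Sum>k<K. op_norm (Deltak d K L nl Q lam v y k))
                        \<le> 2 * (lam (K-1) * acoef L nl lam v (K-1) - lam 0 * acoef L nl lam v 0 * \<delta> - \<alpha>)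
                            * (1 - (1 - s)) * (\<delta>^2 * \<eta>b) / (2 * Lg + (1 - (1 - s)) * (\<delta>^2 * \<eta>b))
                   \<and> (\<forall>t. X (Suc t) \<in> proj_St d K (\<alpha> \<cdot>\<^sub>m X t + colmap d K (Mk d L nl lam v y) (X t)))"
          have Lg0: "0 < Lg" using H by simp
          have lip: "\<forall>A \<in> stiefel d K. \<forall>B \<in> stiefel d K.
                        \<bar>gfun K L nl Q lam v A - gfun K L nl Q lam v B\<bar> \<le> Lg * fro_norm (A - B)"
            using H by blast
          have X0: "X 0 \<in> stiefel d K" using H by blast
          have G0: "gfun K L nl Q lam v Q - gfun K L nl Q lam v (X 0) \<le> \<delta>1" using H \<delta>1_def by simp
          define eps where "eps = (\<Sum>k<K. op_norm (Deltak d K L nl Q lam v y k))"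
          have epsb: "eps \<le> 2 * c * s * \<delta>1 / (2 * Lg + s * \<delta>1)"
            using H unfolding eps_def c_def \<delta>1_def A1_def B1_def by simp
          have it: "X (Suc t) \<in> proj_St d K (\<alpha> \<cdot>\<^sub>m X t + colmap d K (Mk d L nl lam v y) (X t))" for t
            using H by blast
          have XS: "X t \<in> stiefel d K" for t
          proof (induction t)
            case 0 then show ?case using X0 .
          next
            case (Suc t) then show ?case using it[of t] unfolding proj_St_def by blast
          qed
          show "dF K (X t) Q \<le> \<delta>"
          proof (rule ccontr)
            assume "\<not> dF K (X t) Q \<le> \<delta>"
            then have big: "\<delta> < dF K (X t) Q" by simp
            have "\<eta>0 * (dF K (X t) Q)^2 \<le> Lg * dF K (X t) Q"
              using QG[OF XS[of t]] lip_bound[OF Q XS[of t] lip] by linarith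
            then have "\<eta>0 * dF K (X t) Q \<le> Lg" using big d0
              by (simp add: power2_eq_square mult.assoc[symmetric])
            moreover have "\<eta>0 * \<delta> < \<eta>0 * dF K (X t) Q" using big e0 by simp
            ultimately have Lgb: "\<eta>0 * \<delta> < Lg" by simp
            have num0: "0 \<le> c * s * \<delta>1" using cp s0 dl1 by simp
            have "eps \<le> 2 * c * s * \<delta>1 / (2 * Lg + s * \<delta>1)" by (rule epsb)
            also have "\<dots> \<le> 2 * c * s * \<delta>1 / (2 * Lg)"
            proof -
              have p1: "0 < (2 * Lg + s * \<delta>1) * (2 * Lg)" using Lg0 s0 dl1 by (intro mult_pos_pos add_pos_pos) auto
              have p2: "2 * Lg \<le> 2 * Lg + s * \<delta>1" using s0 dl1 by simp
              have p3: "0 \<le> 2 * c * s * \<delta>1" using num0 by (simp add: mult_ac)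
              show ?thesis by (rule divide_left_mono[OF p2 p3 p1])
            qed
            also have "\<dots> = c * s * \<delta>1 / Lg" by simp
            also have "\<dots> \<le> c * s * \<delta>1 / (\<eta>0 * \<delta>)"
            proof -
              have p1: "0 < Lg * (\<eta>0 * \<delta>)" using Lg0 e0 d0 by simp
              show ?thesis by (rule divide_left_mono[OF less_imp_le[OF Lgb] num0 p1])
            qed
            finally have eb: "eps \<le> c * s * \<delta>1 / (\<eta>0 * \<delta>)" .
            have ed: "0 < \<eta>0 * \<delta>" using e0 d0 by simp
            have epsa: "eps \<le> \<alpha>"
            proof -
              have "c * s * \<delta>1 \<le> \<alpha> * (\<eta>0 * \<delta>)" using s2 by (simp add: mult_ac)
              then have "c * s * \<delta>1 / (\<eta>0 * \<delta>) \<le> \<alpha>" using ed by (simp add: pos_divide_le_eq)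
              then show ?thesis using eb by simp
            qed
            have epsd: "eps \<le> \<delta>1 / 2"
            proof -
              have "c * s * \<delta>1 \<le> \<delta>1 / 2 * (\<eta>0 * \<delta>)"
              proof -
                have "c * s \<le> \<eta>0 * \<delta> / 2" using s3 by (simp add: mult_ac)
                then have "(c * s) * \<delta>1 \<le> (\<eta>0 * \<delta> / 2) * \<delta>1" using dl1 by (intro mult_right_mono) auto
                then show ?thesis by (simp add: mult_ac)
              qed
              then have "c * s * \<delta>1 / (\<eta>0 * \<delta>) \<le> \<delta>1 / 2" using ed by (simp only: pos_divide_le_eq)
              then show ?thesis using eb by linarith
            qed
            have lam0: "\<forall>j<K. 0 \<le> lam j" using lam_pos by (simp add: less_imp_le)
            have a0: "\<forall>k<K. 0 \<le> acoef L nl lam v k" using a_pos by (simp add: less_imp_le)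
            have mono: "ftil d K (Mk d L nl lam v y) (X 0) \<le> ftil d K (Mk d L nl lam v y) (X t')" for t'
            proof (induction t')
              case 0 then show ?case by simp
            next
              case (Suc t')
              have "ftil d K (Mk d L nl lam v y) (X t') \<le> ftil d K (Mk d L nl lam v y) (X (Suc t'))"
                using step_mono[OF QC XS[of t'] it[of t'] _ lam0 a0] epsa unfolding eps_def by simp
              then show ?case using Suc by simp
            qed
            have f0: "\<bar>ftil d K (Mk d L nl lam v y) (X 0) - gfun K L nl Q lam v (X 0)\<bar> \<le> eps"
              unfolding eps_def by (rule ftil_g[OF QC X0])
            have ft: "\<bar>ftil d K (Mk d L nl lam v y) (X t) - gfun K L nl Q lam v (X t)\<bar> \<le> eps"
              unfolding eps_def by (rule ftil_g[OF QC XS])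
            have "gfun K L nl Q lam v Q - gfun K L nl Q lam v (X t) \<le> \<delta>1 + 2 * eps"
              using f0 ft mono[of t] G0 by (simp add: abs_le_iff)
            also have "\<dots> \<le> \<delta>^2 * \<eta>0" using epsd unfolding \<delta>1_def \<eta>b_def by simp
            finally have "\<eta>0 * (dF K (X t) Q)^2 \<le> \<eta>0 * \<delta>^2" using QG[OF XS[of t]] by (simp add: mult_ac)
            then have "(dF K (X t) Q)^2 \<le> \<delta>^2" using e0 by simp
            then have "dF K (X t) Q \<le> \<delta>" by (rule power2_le_imp_le[OF _ less_imp_le[OF d0]])
            then show False using big by simp
          qed
        qed
      qed
    qed
  qed
qed


end
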